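(* Suppose $\mathbb P^1_i=U(0,1)$ for all $i\in\mathcal H_1$. Then for $\ell=0,\dots,N$, $$\mathbb P(\tilde k=\ell)=\frac{1-q}{1-q+\frac{(N-\ell)q}{N}}\cdot\mathbb P\big(B^{\mathcal N}_{1:\ell}=\ell\big),\qquad \mathbb P\big(B^{\mathcal N}_{1:\ell}=\ell\big)=\binom{N}{\ell}\Big(\frac{q\ell}{N}\Big)^{\ell}\Big(1-\frac{q\ell}{N}\Big)^{N-\ell},$$ with the convention $0^0=1$. Moreover, for an integer $c\ge1$, on the event $B^0_{N+1}\ge c$, $$\mathbb P\big(\tilde k_{+c}=c\,\big|\,B^0_{N+1}\big)=\Big(1-\frac{cq}{N}\Big)^{N_1}\Big(1-\frac{c}{N}\Big)^{N_0-B^0_{N+1}}\Big(1-\frac{N_0-B^0_{N+1}}{N-c}-\frac{N_1q}{N-cq}\Big).$$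
   Context: Setting: $N\ge 1$ tests indexed by $\mathcal N=\{1,\dots,N\}=\mathcal H_0\sqcup\mathcal H_1$ (null and alternative indices), $N_0=|\mathcal H_0|$, $N_1=|\mathcal H_1|$. The p-values $p=(p_i)_{i\in\mathcal N}$ are jointly independent, with $p_i\sim U(0,1)$ for $i\in\mathcal H_0$ and $p_i\sim\mathbb P^1_i$ for $i\in\mathcal H_1$. Fix $q\in(0,1)$. Bins: $B_i=\{x:(i-1)q/N\le x<iq/N\}$ for $i=1,\dots,N$, and $B_{N+1}=[q,1]$. Loads: $B^0_i=|\{j\in\mathcal H_0:p_j\in B_i\}|$, $B^{\mathcal N}_i=|\{j\in\mathcal N:p_j\in B_i\}|$; $B^{\ast}_{a:b}=\sum_{l=a}^bB^\ast_l$, $B^\ast_{1:0}=0$. Rejection count $\tilde k=\max\{i\in\{0,\dots,N\}:B^{\mathcal N}_{1:i}=i\}$; $\tilde k_{+c}=\max\{i\in\{c,\dots,N\}:B^{\mathcal N}_{1:i}=i-c\}$ if $B^0_{N+1}\ge c$, and $\tilde k_{+c}=\tilde k$ otherwise. *)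

theory Defs
  imports "HOL-Probability.Probability"
begin

definition bin :: "nat \<Rightarrow> real \<Rightarrow> nat \<Rightarrow> real set" where
  "bin N q i = (if i = N + 1 then {x. q \<le> x \<and> x \<le> 1}
                else {x. real (i - 1) * q / real N \<le> x \<and> x < real i * q / real N})"

definition load :: "nat set \<Rightarrow> nat \<Rightarrow> real \<Rightarrow> (nat \<Rightarrow> real) \<Rightarrow> nat \<Rightarrow> nat" where
  "load S N q p i = card {j\<in>S. p j \<in> bin N q i}"

definition loadsum :: "nat set \<Rightarrow> nat \<Rightarrow> real \<Rightarrow> (nat \<Rightarrow> real) \<Rightarrow> nat \<Rightarrow> nat \<Rightarrow> nat" where
  "loadsum S N q p a b = (\<Sum>l=a..b. load S N q p l)"

definition ktilde :: "nat \<Rightarrow> real \<Rightarrow> (nat \<Rightarrow> real) \<Rightarrow> nat" where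
  "ktilde N q p = Max {i\<in>{0..N}. loadsum {1..N} N q p 1 i = i}"

text \<open>\<tilde>k_{+c}; H0 is the set of null indices.\<close>
definition ktilde_plus :: "nat set \<Rightarrow> nat \<Rightarrow> nat \<Rightarrow> real \<Rightarrow> (nat \<Rightarrow> real) \<Rightarrow> nat" where
  "ktilde_plus H0 c N q p =
     (if load H0 N q p (N + 1) \<ge> c
      then Max {i\<in>{c..N}. loadsum {1..N} N q p 1 i = i - c}
      else ktilde N q p)"

text \<open>Joint law of independent p-values, all U(0,1) (case P^1_i = U(0,1)).\<close>
definition pmodel :: "nat \<Rightarrow> (nat \<Rightarrow> real) measure" where
  "pmodel N = PiM {1..N} (\<lambda>_. uniform_measure lborel {0..1})"

end

theory Submission
  imports Defs
begin


lemma sum_pow_insert: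
  assumes "finite J" "x \<notin> J"
  shows "(\<Sum>T\<in>Pow (insert x J). F T) = (\<Sum>T\<in>Pow J. F T) + (\<Sum>T\<in>Pow J. F (insert x T))"
proof -
  have e: "Pow (insert x J) = Pow J \<union> insert x ` Pow J" by (rule Pow_insert)
  have disj: "Pow J \<inter> insert x ` Pow J = {}" using assms by auto
  have inj: "inj_on (insert x) (Pow J)" using assms unfolding inj_on_def
    by (metis PowD insert_ident subset_iff)
  have "(\<Sum>T\<in>Pow (insert x J). F T) = (\<Sum>T\<in>Pow J. F T) + (\<Sum>T\<in>insert x ` Pow J. F T)"
    unfolding e using assms disj by (intro sum.union_disjoint) auto
  also have "(\<Sum>T\<in>insert x ` Pow J. F T) = (\<Sum>T\<in>Pow J. F (insert x T))"
    using inj by (simp add: sum.reindex)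
  finally show ?thesis .
qed

lemma alg_aux:
  fixes a b :: "nat \<Rightarrow> real" and x :: real
  assumes "finite J"
  shows "(\<Sum>T\<in>Pow J. (\<Prod>j\<in>J-T. b j) * (\<Prod>j\<in>T. a j) * x ^ card T) = (\<Prod>j\<in>J. x * a j + b j)"
proof -
  have "(\<Prod>j\<in>J. x * a j + b j) = (\<Sum>X\<in>Pow J. (\<Prod>j\<in>X. x * a j) * (\<Prod>j\<in>J - X. b j))"
    using assms by (rule prod_add)
  also have "\<dots> = (\<Sum>T\<in>Pow J. (\<Prod>j\<in>J-T. b j) * (\<Prod>j\<in>T. a j) * x ^ card T)"
    by (intro sum.cong refl) (simp add: prod.distrib)
  finally show ?thesis by simp
qed

lemma alg:
  fixes a b :: "nat \<Rightarrow> real" and x :: real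
  assumes "finite J"
  shows "(\<Sum>T\<in>Pow J. (\<Prod>j\<in>J-T. b j) * (\<Prod>j\<in>T. a j) * (x ^ card T - real (card T) * x ^ (card T - 1)))
     = (\<Prod>j\<in>J. x * a j + b j) - (\<Sum>j\<in>J. a j * (\<Prod>k\<in>J-{j}. x * a k + b k))"
  using assms
proof (induction J rule: finite_induct)
  case empty
  then show ?case by simp
next
  case (insert y J)
  define c where "c = (\<lambda>m::nat. x ^ m - real m * x ^ (m - 1))"
  have cS: "c (Suc m) = x * c m - x ^ m" for m
    unfolding c_def by (cases m) (auto simp: algebra_simps)
  have fT: "finite T" if "T \<in> Pow J" for T using that insert(1) finite_subset by auto
  have L: "(\<Sum>T\<in>Pow (insert y J). (\<Prod>j\<in>insert y J-T. b j) * (\<Prod>j\<in>T. a j) * c (card T))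
      = (\<Sum>T\<in>Pow J. (\<Prod>j\<in>insert y J-T. b j) * (\<Prod>j\<in>T. a j) * c (card T))
       + (\<Sum>T\<in>Pow J. (\<Prod>j\<in>insert y J-insert y T. b j) * (\<Prod>j\<in>insert y T. a j) * c (card (insert y T)))"
    by (rule sum_pow_insert[OF insert(1,2)])
  have 1: "(\<Prod>j\<in>insert y J-T. b j) = b y * (\<Prod>j\<in>J-T. b j)" if "T \<in> Pow J" for T
  proof -
    have "insert y J - T = insert y (J - T)" using that insert(2) by auto
    then show ?thesis using insert(1,2) by simp
  qed
  have 2: "(\<Prod>j\<in>insert y J-insert y T. b j) * (\<Prod>j\<in>insert y T. a j) * c (card (insert y T))
      = a y * (x * ((\<Prod>j\<in>J-T. b j) * (\<Prod>j\<in>T. a j) * c (card T)) - (\<Prod>j\<in>J-T. b j) * (\<Prod>j\<in>T. a j) * x ^ card T)"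
    if "T \<in> Pow J" for T
  proof -
    have "insert y J - insert y T = J - T" using that insert(2) by auto
    moreover have "y \<notin> T" using that insert(2) by auto
    ultimately show ?thesis using fT[OF that] by (simp add: cS algebra_simps)
  qed
  have "(\<Sum>T\<in>Pow (insert y J). (\<Prod>j\<in>insert y J-T. b j) * (\<Prod>j\<in>T. a j) * c (card T))
     = b y * (\<Sum>T\<in>Pow J. (\<Prod>j\<in>J-T. b j) * (\<Prod>j\<in>T. a j) * c (card T))
      + a y * (x * (\<Sum>T\<in>Pow J. (\<Prod>j\<in>J-T. b j) * (\<Prod>j\<in>T. a j) * c (card T))
              - (\<Sum>T\<in>Pow J. (\<Prod>j\<in>J-T. b j) * (\<Prod>j\<in>T. a j) * x ^ card T))"
  proof -
    have A: "(\<Sum>T\<in>Pow J. (\<Prod>j\<in>insert y J-T. b j) * (\<Prod>j\<in>T. a j) * c (card T))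
        = b y * (\<Sum>T\<in>Pow J. (\<Prod>j\<in>J-T. b j) * (\<Prod>j\<in>T. a j) * c (card T))"
      unfolding sum_distrib_left by (intro sum.cong refl) (simp add: 1)
    have B: "(\<Sum>T\<in>Pow J. (\<Prod>j\<in>insert y J-insert y T. b j) * (\<Prod>j\<in>insert y T. a j) * c (card (insert y T)))
        = a y * (x * (\<Sum>T\<in>Pow J. (\<Prod>j\<in>J-T. b j) * (\<Prod>j\<in>T. a j) * c (card T))
              - (\<Sum>T\<in>Pow J. (\<Prod>j\<in>J-T. b j) * (\<Prod>j\<in>T. a j) * x ^ card T))"
      unfolding sum_distrib_left sum_subtractf[symmetric] by (intro sum.cong refl 2)
    show ?thesis unfolding L A B ..
  qed
  also have "\<dots> = (x * a y + b y) * ((\<Prod>j\<in>J. x * a j + b j) - (\<Sum>j\<in>J. a j * (\<Prod>k\<in>J-{j}. x * a k + b k)))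
      - a y * (\<Prod>j\<in>J. x * a j + b j)"
  proof -
    have IHc: "(\<Sum>T\<in>Pow J. (\<Prod>j\<in>J-T. b j) * (\<Prod>j\<in>T. a j) * c (card T)) =
       (\<Prod>j\<in>J. x * a j + b j) - (\<Sum>j\<in>J. a j * (\<Prod>k\<in>J-{j}. x * a k + b k))"
      using insert.IH unfolding c_def .
    show ?thesis unfolding IHc alg_aux[OF insert(1), of b a x] by (simp add: algebra_simps)
  qed
  also have "\<dots> = (\<Prod>j\<in>insert y J. x * a j + b j) - (\<Sum>j\<in>insert y J. a j * (\<Prod>k\<in>insert y J-{j}. x * a k + b k))"
  proof -
    have "(\<Sum>j\<in>J. a j * (\<Prod>k\<in>insert y J-{j}. x * a k + b k)) = (\<Sum>j\<in>J. (x * a y + b y) * (a j * (\<Prod>k\<in>J-{j}. x * a k + b k)))"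
    proof (intro sum.cong refl)
      fix j assume "j \<in> J"
      then have "insert y J - {j} = insert y (J - {j})" using insert(2) by auto
      then show "a j * (\<Prod>k\<in>insert y J-{j}. x * a k + b k) = (x * a y + b y) * (a j * (\<Prod>k\<in>J-{j}. x * a k + b k))"
        using insert(1,2) by simp
    qed
    moreover have "insert y J - {y} = J" using insert(2) by auto
    ultimately show ?thesis using insert(1,2) by (simp add: sum_distrib_left algebra_simps)
  qed
  finally show ?case unfolding c_def .
qed

definition cle :: "nat set \<Rightarrow> (nat \<Rightarrow> nat) \<Rightarrow> nat \<Rightarrow> nat" where
  "cle J f i = card {j\<in>J. f j \<le> i}"

definition goodE :: "nat \<Rightarrow> nat set \<Rightarrow> (nat \<Rightarrow> nat) \<Rightarrow> bool" where
  "goodE n J f \<longleftrightarrow> (\<forall>i\<in>{1..n}. cle J f i < i)"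

definition Lsum :: "nat \<Rightarrow> nat set \<Rightarrow> (nat \<Rightarrow> real) \<Rightarrow> (nat \<Rightarrow> real) \<Rightarrow> real" where
  "Lsum n J a b = (\<Sum>f\<in>PiE J (\<lambda>_. {1..n+1}).
      if goodE n J f then (\<Prod>j\<in>J. if f j \<le> n then a j else b j) else 0)"

lemma cle_le_card: "finite J \<Longrightarrow> cle J f i \<le> card J"
  unfolding cle_def by (intro card_mono) auto

lemma Lsum_split:
  assumes J: "finite J"
  shows "Lsum (Suc n) J a b = (\<Sum>T\<in>Pow J. (\<Prod>j\<in>J-T. b j) * (\<Prod>j\<in>T. a j) *
            real (card {g \<in> PiE T (\<lambda>_. {1..Suc n}). goodE (Suc n) T g}))"
proof -
  let ?F = "PiE J (\<lambda>_. {1..Suc n+1})"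
  let ?h = "\<lambda>f. if goodE (Suc n) J f then (\<Prod>j\<in>J. if f j \<le> Suc n then a j else b j) else 0"
  let ?k = "\<lambda>f. {j\<in>J. f j \<le> Suc n}"
  have "Lsum (Suc n) J a b = sum ?h ?F" unfolding Lsum_def by simp
  also have "\<dots> = (\<Sum>T\<in>Pow J. sum ?h {f\<in>?F. ?k f = T})"
    by (rule sum.group[symmetric]) (use J in \<open>auto simp: finite_PiE\<close>)
  also have "\<dots> = (\<Sum>T\<in>Pow J. (\<Prod>j\<in>J-T. b j) * (\<Prod>j\<in>T. a j) *
            real (card {g \<in> PiE T (\<lambda>_. {1..Suc n}). goodE (Suc n) T g}))"
  proof (intro sum.cong refl)
    fix T assume T: "T \<in> Pow J"
    define Y where "Y = (\<lambda>j. if j \<in> T then {1..Suc n} else {Suc n + 1})"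
    have setF: "{f\<in>?F. ?k f = T} = PiE J Y"
      using T unfolding Y_def
      apply (intro set_eqI)
      apply (simp add: PiE_iff)
      apply (intro iffI conjI)
      apply (auto split: if_splits)
      done
    have good: "goodE (Suc n) J f = goodE (Suc n) T f" if "f \<in> PiE J Y" for f
    proof -
      have "cle J f i = cle T f i" if "i \<le> Suc n" for i
      proof -
        have "{j\<in>J. f j \<le> i} = {j\<in>T. f j \<le> i}"
          using T \<open>f \<in> PiE J Y\<close> that unfolding Y_def by (auto simp: PiE_iff split: if_splits)
        then show ?thesis unfolding cle_def by simp
      qed
      then show ?thesis unfolding goodE_def by auto
    qed
    have wt: "(\<Prod>j\<in>J. if f j \<le> Suc n then a j else b j) = (\<Prod>j\<in>J-T. b j) * (\<Prod>j\<in>T. a j)"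
      if "f \<in> PiE J Y" for f
    proof -
      have "(\<Prod>j\<in>J. if f j \<le> Suc n then a j else b j) = (\<Prod>j\<in>J. if j \<in> T then a j else b j)"
        using that unfolding Y_def by (intro prod.cong refl) (auto simp: PiE_iff split: if_splits)
      also have "\<dots> = (\<Prod>j\<in>J \<inter> T. a j) * (\<Prod>j\<in>J - T. b j)"
        using J by (simp add: prod.If_cases Diff_eq)
      also have "J \<inter> T = T" using T by auto
      finally show ?thesis by simp
    qed
    have "sum ?h {f\<in>?F. ?k f = T} = (\<Sum>f\<in>PiE J Y. if goodE (Suc n) T f then (\<Prod>j\<in>J-T. b j) * (\<Prod>j\<in>T. a j) else 0)"
      unfolding setF by (intro sum.cong refl) (simp add: good wt)
    also have "\<dots> = (\<Prod>j\<in>J-T. b j) * (\<Prod>j\<in>T. a j) * real (card {f\<in>PiE J Y. goodE (Suc n) T f})"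
      by (subst sum.inter_filter[symmetric]) (auto simp: finite_PiE J Y_def mult.commute)
    also have "card {f\<in>PiE J Y. goodE (Suc n) T f} = card {g \<in> PiE T (\<lambda>_. {1..Suc n}). goodE (Suc n) T g}"
    proof (rule bij_betw_same_card)
      have gr: "goodE (Suc n) T (restrict f T) = goodE (Suc n) T f" for f
        unfolding goodE_def cle_def by (simp cong: conj_cong)
      let ?ext = "\<lambda>g j. if j \<in> T then g j else if j \<in> J then Suc n + 1 else undefined"
      have gr2: "goodE (Suc n) T (?ext g) = goodE (Suc n) T g" for g
        unfolding goodE_def cle_def by (simp cong: conj_cong)
      show "bij_betw (\<lambda>f. restrict f T) {f\<in>PiE J Y. goodE (Suc n) T f} {g \<in> PiE T (\<lambda>_. {1..Suc n}). goodE (Suc n) T g}"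
      proof (rule bij_betwI[where g = ?ext])
        show "(\<lambda>f. restrict f T) \<in> {f\<in>PiE J Y. goodE (Suc n) T f} \<rightarrow> {g \<in> PiE T (\<lambda>_. {1..Suc n}). goodE (Suc n) T g}"
          using T by (auto simp: gr Y_def PiE_iff)
        show "?ext \<in> {g \<in> PiE T (\<lambda>_. {1..Suc n}). goodE (Suc n) T g} \<rightarrow> {f\<in>PiE J Y. goodE (Suc n) T f}"
          using T by (auto simp: gr2 Y_def PiE_iff extensional_def)
        show "?ext (restrict f T) = f" if "f \<in> {f\<in>PiE J Y. goodE (Suc n) T f}" for f
          using T that by (auto simp: Y_def PiE_iff fun_eq_iff extensional_def)
        show "restrict (?ext g) T = g" if "g \<in> {g \<in> PiE T (\<lambda>_. {1..Suc n}). goodE (Suc n) T g}" for g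
          using T that by (auto simp: PiE_iff fun_eq_iff extensional_def)
      qed
    qed
    finally show "sum ?h {f\<in>?F. ?k f = T} = (\<Prod>j\<in>J-T. b j) * (\<Prod>j\<in>T. a j) *
            real (card {g \<in> PiE T (\<lambda>_. {1..Suc n}). goodE (Suc n) T g})" .
  qed
  finally show ?thesis .
qed

lemma Lsum_formula:
  assumes "finite J" "card J \<le> n"
  shows "Lsum n J a b = (\<Prod>j\<in>J. real n * a j + b j) - (\<Sum>j\<in>J. a j * (\<Prod>k\<in>J-{j}. real n * a k + b k))"
  using assms
proof (induction n arbitrary: J a b)
  case 0
  then have "J = {}" by auto
  then show ?case unfolding Lsum_def goodE_def by simp
next
  case (Suc n)
  have cnt: "real (card {g \<in> PiE T (\<lambda>_. {1..Suc n}). goodE (Suc n) T g})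
      = real (Suc n) ^ card T - real (card T) * real (Suc n) ^ (card T - 1)" if T: "T \<in> Pow J" for T
  proof -
    have fT: "finite T" using T Suc.prems(1) finite_subset by auto
    have "card T \<le> card J" using T by (intro card_mono[OF Suc.prems(1)]) auto
    then have cT: "card T \<le> Suc n" using Suc.prems(2) by linarith
    show ?thesis
    proof (cases "card T = Suc n")
      case True
      have emp: "{g \<in> PiE T (\<lambda>_. {1..Suc n}). goodE (Suc n) T g} = {}"
      proof -
        have "\<not> goodE (Suc n) T g" if "g \<in> PiE T (\<lambda>_. {1..Suc n})" for g
        proof -
          have "{j\<in>T. g j \<le> Suc n} = T" using that by (auto simp: PiE_iff)
          then have "cle T g (Suc n) = Suc n" unfolding cle_def using True by simp
          then show ?thesis unfolding goodE_def by (metis atLeastAtMost_iff le_add1 le_refl less_irrefl plus_1_eq_Suc)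
        qed
        then show ?thesis by auto
      qed
      have "real (Suc n) ^ Suc n - real (Suc n) * real (Suc n) ^ n = 0" by simp
      then show ?thesis unfolding emp using True by simp
    next
      case False
      then have cT': "card T \<le> n" using cT by simp
      have IH: "Lsum n T (\<lambda>_. 1) (\<lambda>_. 1) = (\<Prod>j\<in>T. real n * 1 + 1) - (\<Sum>j\<in>T. 1 * (\<Prod>k\<in>T-{j}. real n * 1 + 1))"
        by (rule Suc.IH[OF fT cT'])
      have eqg: "goodE n T g = goodE (Suc n) T g" for g
      proof -
        have "cle T g (Suc n) < Suc n" using cle_le_card[OF fT, of g "Suc n"] cT' by linarith
        then show ?thesis unfolding goodE_def by (auto simp: le_Suc_eq)
      qed
      have "Lsum n T (\<lambda>_. 1) (\<lambda>_. 1) = real (card {g \<in> PiE T (\<lambda>_. {1..Suc n}). goodE (Suc n) T g})"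
      proof -
        have "Lsum n T (\<lambda>_. 1) (\<lambda>_. 1) = (\<Sum>f\<in>PiE T (\<lambda>_. {1..Suc n}). if goodE (Suc n) T f then 1 else 0)"
          unfolding Lsum_def by (intro sum.cong) (auto simp: eqg)
        also have "\<dots> = real (card {g \<in> PiE T (\<lambda>_. {1..Suc n}). goodE (Suc n) T g})"
          by (subst sum.inter_filter[symmetric]) (auto simp: fT finite_PiE)
        finally show ?thesis .
      qed
      moreover have "(\<Sum>j\<in>T. 1 * (\<Prod>k\<in>T-{j}. real n * 1 + 1)) = real (card T) * real (Suc n) ^ (card T - 1)"
      proof -
        have "(\<Sum>j\<in>T. 1 * (\<Prod>k\<in>T-{j}. real n * 1 + 1)) = (\<Sum>j\<in>T. real (Suc n) ^ (card T - 1))"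
          by (intro sum.cong refl) (simp add: card_Diff_singleton fT add.commute)
        then show ?thesis by simp
      qed
      moreover have "(\<Prod>j\<in>T. real n * 1 + 1) = real (Suc n) ^ card T" by (simp add: add.commute)
      ultimately show ?thesis using IH by linarith
    qed
  qed
  have "Lsum (Suc n) J a b = (\<Sum>T\<in>Pow J. (\<Prod>j\<in>J-T. b j) * (\<Prod>j\<in>T. a j) *
            (real (Suc n) ^ card T - real (card T) * real (Suc n) ^ (card T - 1)))"
    unfolding Lsum_split[OF Suc.prems(1)] by (intro sum.cong refl arg_cong2[where f="(*)"] cnt)
  also have "\<dots> = (\<Prod>j\<in>J. real (Suc n) * a j + b j) - (\<Sum>j\<in>J. a j * (\<Prod>k\<in>J-{j}. real (Suc n) * a k + b k))"
    by (rule alg[OF Suc.prems(1)])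
  finally show ?case .
qed

lemma sum_PiE_split:
  assumes "finite S" "finite T" "S \<inter> T = {}"
  shows "(\<Sum>f\<in>PiE (S \<union> T) Y. G (restrict f S) * H (restrict f T))
       = (\<Sum>g\<in>PiE S Y. G g) * (\<Sum>h\<in>PiE T Y. (H h :: real))"
proof -
  let ?phi = "\<lambda>f. (restrict f S, restrict f T)"
  let ?psi = "\<lambda>(g, h). (\<lambda>j. if j \<in> S then g j else h j)"
  have bij: "bij_betw ?phi (PiE (S \<union> T) Y) (PiE S Y \<times> PiE T Y)"
  proof (rule bij_betwI[where g = ?psi])
    show "?phi \<in> PiE (S \<union> T) Y \<rightarrow> PiE S Y \<times> PiE T Y" by auto
    show "?psi \<in> PiE S Y \<times> PiE T Y \<rightarrow> PiE (S \<union> T) Y"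
      using assms(3) by (auto simp: PiE_iff extensional_def)
    show "?psi (?phi f) = f" if "f \<in> PiE (S \<union> T) Y" for f
      using that by (auto simp: PiE_iff extensional_def fun_eq_iff)
    show "?phi (?psi gh) = gh" if "gh \<in> PiE S Y \<times> PiE T Y" for gh
      using that assms(3) by (cases gh) (auto simp: PiE_iff extensional_def fun_eq_iff)
  qed
  have "(\<Sum>f\<in>PiE (S \<union> T) Y. G (restrict f S) * H (restrict f T))
      = (\<Sum>f\<in>PiE (S \<union> T) Y. (\<lambda>(g, h). G g * H h) (?phi f))" by simp
  also have "\<dots> = (\<Sum>gh\<in>PiE S Y \<times> PiE T Y. (\<lambda>(g, h). G g * H h) gh)"
    by (rule sum.reindex_bij_betw[OF bij])
  also have "\<dots> = (\<Sum>g\<in>PiE S Y. G g) * (\<Sum>h\<in>PiE T Y. H h)"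
    by (simp add: sum_product sum.cartesian_product)
  finally show ?thesis .
qed

lemma sum_PiE_shift:
  fixes c N :: nat and F :: "(nat \<Rightarrow> nat) \<Rightarrow> real"
  assumes "c \<le> N"
  shows "(\<Sum>h\<in>PiE T (\<lambda>_. {c+1..N+1}). F h) = (\<Sum>h\<in>PiE T (\<lambda>_. {1..N-c+1}). F (\<lambda>j\<in>T. h j + c))"
proof -
  have bij: "bij_betw (\<lambda>h. \<lambda>j\<in>T. h j + c) (PiE T (\<lambda>_. {1..N-c+1})) (PiE T (\<lambda>_. {c+1..N+1}))"
  proof (rule bij_betwI[where g = "\<lambda>h. \<lambda>j\<in>T. h j - c"])
    show "(\<lambda>h. \<lambda>j\<in>T. h j + c) \<in> PiE T (\<lambda>_. {1..N-c+1}) \<rightarrow> PiE T (\<lambda>_. {c+1..N+1})"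
    proof
      fix h assume h: "h \<in> PiE T (\<lambda>_. {1..N-c+1})"
      have "\<forall>j\<in>T. c+1 \<le> h j + c \<and> h j + c \<le> N+1"
      proof
        fix j assume "j \<in> T"
        then have "1 \<le> h j \<and> h j \<le> N - c + 1" using h by (auto simp: PiE_iff)
        then show "c+1 \<le> h j + c \<and> h j + c \<le> N+1" using assms by linarith
      qed
      then show "(\<lambda>j\<in>T. h j + c) \<in> PiE T (\<lambda>_. {c+1..N+1})" by (auto simp: PiE_iff)
    qed
    show "(\<lambda>h. \<lambda>j\<in>T. h j - c) \<in> PiE T (\<lambda>_. {c+1..N+1}) \<rightarrow> PiE T (\<lambda>_. {1..N-c+1})"
    proof
      fix h assume h: "h \<in> PiE T (\<lambda>_. {c+1..N+1})"
      have "\<forall>j\<in>T. 1 \<le> h j - c \<and> h j - c \<le> N - c + 1"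
      proof
        fix j assume "j \<in> T"
        then have "c + 1 \<le> h j \<and> h j \<le> N + 1" using h by (auto simp: PiE_iff)
        then show "1 \<le> h j - c \<and> h j - c \<le> N - c + 1" using assms by linarith
      qed
      then show "(\<lambda>j\<in>T. h j - c) \<in> PiE T (\<lambda>_. {1..N-c+1})" by (auto simp: PiE_iff)
    qed
    show "(\<lambda>j\<in>T. (\<lambda>j\<in>T. h j + c) j - c) = h" if "h \<in> PiE T (\<lambda>_. {1..N-c+1})" for h
      using that by (auto simp: PiE_iff extensional_def fun_eq_iff)
    show "(\<lambda>j\<in>T. (\<lambda>j\<in>T. h j - c) j + c) = h" if "h \<in> PiE T (\<lambda>_. {c+1..N+1})" for h
      using that by (auto simp: PiE_iff extensional_def fun_eq_iff)
  qed
  show ?thesis by (rule sum.reindex_bij_betw[OF bij, symmetric])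
qed

lemma ivt_walk:
  fixes phi :: "nat \<Rightarrow> nat"
  assumes mono: "\<And>i. i < b \<Longrightarrow> phi i \<le> phi (Suc i)" and endb: "phi b + d \<le> b"
  shows "i \<le> b \<Longrightarrow> i \<le> phi i + d \<Longrightarrow> \<exists>j\<in>{i..b}. phi j + d = j"
proof (induction "b - i" arbitrary: i)
  case 0
  then have "i = b" by simp
  then show ?case using 0 endb by auto
next
  case (Suc k)
  show ?case
  proof (cases "phi i + d = i")
    case True then show ?thesis using Suc.prems by auto
  next
    case False
    then have lt: "i < b" using Suc.prems endb by (cases "i = b") auto
    have "Suc i \<le> phi (Suc i) + d" using mono[OF lt] Suc.prems False by linarith
    moreover have "k = b - Suc i" using Suc.hyps(2) by arith
    ultimately obtain j where "j \<in> {Suc i..b}" "phi j + d = j" using Suc.hyps(1)[of "Suc i"] lt by auto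
    then show ?thesis by auto
  qed
qed

lemma walk_equiv:
  fixes phi :: "nat \<Rightarrow> nat"
  assumes mono: "\<And>i. i < b \<Longrightarrow> phi i \<le> phi (Suc i)" and endb: "phi b + d \<le> b"
  shows "(\<forall>i\<in>{k+1..b}. phi i + d \<noteq> i) \<longleftrightarrow> (\<forall>i\<in>{k+1..b}. phi i + d < i)"
proof
  assume H: "\<forall>i\<in>{k+1..b}. phi i + d \<noteq> i"
  show "\<forall>i\<in>{k+1..b}. phi i + d < i"
  proof
    fix i assume i: "i \<in> {k+1..b}"
    show "phi i + d < i"
    proof (rule ccontr)
      assume "\<not> phi i + d < i"
      then obtain j where "j \<in> {i..b}" "phi j + d = j" using ivt_walk[OF mono endb, of i] i by force
      then show False using H i by auto
    qed
  qed
qed auto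



definition binx :: "nat \<Rightarrow> real \<Rightarrow> nat \<Rightarrow> real set" where
  "binx N q i = (if i = 0 then - {0..1} else bin N q i)"

definition wt :: "nat \<Rightarrow> real \<Rightarrow> nat \<Rightarrow> real" where
  "wt N q i = (if i = 0 then 0 else if i \<le> N then q / real N else 1 - q)"

definition unif :: "real measure" where "unif = uniform_measure lborel {0..1}"

lemma bin_low: "i \<noteq> N + 1 \<Longrightarrow> bin N q i = {real (i - 1) * q / real N ..< real i * q / real N}"
  unfolding bin_def by auto

lemma bin_top: "bin N q (N + 1) = {q..1}" "bin N q (Suc N) = {q..1}"
  unfolding bin_def by auto

lemma prob_unif: "prob_space unif"
  unfolding unif_def by (rule prob_space_uniform_measure) auto

lemma binx_sets: "binx N q i \<in> sets borel"
  unfolding binx_def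
  by (cases "i = N + 1") (auto simp: bin_low bin_top)

lemma emeasure_unif_binx:
  assumes N: "N \<ge> 1" and q: "0 < q" "q < 1" and i: "i \<le> N + 1"
  shows "emeasure unif (binx N q i) = ennreal (wt N q i)"
proof -
  have "emeasure unif (binx N q i) = emeasure lborel ({0..1} \<inter> binx N q i)"
    unfolding unif_def using binx_sets[of N q i] by (simp add: divide_ennreal_def)
  also have "\<dots> = ennreal (wt N q i)"
  proof (cases "i = 0")
    case True then show ?thesis by (simp add: binx_def wt_def)
  next
    case False
    show ?thesis
    proof (cases "i = N + 1")
      case True
      have "{0..1} \<inter> binx N q i = {q..1}" using True q False by (auto simp: binx_def bin_top)
      then show ?thesis using True q by (simp add: wt_def)
    next
      case iN: False
      have le: "i \<le> N" using i iN by simp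
      have a0: "0 \<le> real (i - 1) * q / real N" using q by simp
      have b1: "real i * q / real N \<le> 1"
      proof -
        have "real i * q \<le> real N * 1" using le q by (intro mult_mono) auto
        then show ?thesis using N by (simp add: divide_le_eq)
      qed
      have ab: "real (i - 1) * q / real N \<le> real i * q / real N"
        using q N by (intro divide_right_mono mult_right_mono) auto
      have "{0..1} \<inter> binx N q i = {real (i - 1) * q / real N ..< real i * q / real N}"
        using False iN a0 b1 by (auto simp: binx_def bin_low)
      moreover have "real i * q / real N - real (i - 1) * q / real N = q / real N"
        using False N by (simp add: of_nat_diff diff_divide_distrib[symmetric] algebra_simps)
      ultimately show ?thesis using ab False iN le by (simp add: wt_def)
    qed
  qed
  finally show ?thesis .
qed

lemma wt_nonneg: "0 < q \<Longrightarrow> q < 1 \<Longrightarrow> 0 \<le> wt N q i"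
  unfolding wt_def by auto

lemma pmodel_unif: "pmodel N = PiM {1..N} (\<lambda>_. unif)"
  unfolding pmodel_def unif_def ..

lemma pps: "product_prob_space (\<lambda>_::nat. unif)"
  unfolding product_prob_space_def product_sigma_finite_def product_prob_space_axioms_def
  using prob_unif prob_space_imp_sigma_finite by blast

lemma prob_pmodel: "prob_space (pmodel N)"
  unfolding pmodel_unif by (intro prob_space_PiM prob_unif)

lemma measure_box:
  assumes N: "N \<ge> 1" and q: "0 < q" "q < 1" and g: "g \<in> PiE {1..N} (\<lambda>_. {0..N+1})"
  shows "measure (pmodel N) (PiE {1..N} (\<lambda>j. binx N q (g j))) = (\<Prod>j\<in>{1..N}. wt N q (g j))"
proof -
  interpret P: product_prob_space "\<lambda>_::nat. unif" by (rule pps)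
  have "emeasure (pmodel N) (PiE {1..N} (\<lambda>j. binx N q (g j))) = (\<Prod>j\<in>{1..N}. emeasure unif (binx N q (g j)))"
    unfolding pmodel_unif by (rule P.emeasure_PiM) (auto simp: unif_def binx_sets)
  also have "\<dots> = (\<Prod>j\<in>{1..N}. ennreal (wt N q (g j)))"
    using g by (intro prod.cong refl emeasure_unif_binx[OF N q]) (auto simp: PiE_iff)
  also have "\<dots> = ennreal (\<Prod>j\<in>{1..N}. wt N q (g j))"
    using wt_nonneg[OF q] by (simp add: prod_ennreal)
  finally show ?thesis unfolding measure_def using wt_nonneg[OF q] by (simp add: prod_nonneg)
qed

lemma bin_sub01:
  assumes N: "N \<ge> 1" and q: "0 < q" "q < 1" and k: "1 \<le> k" "k \<le> N + 1" and x: "x \<in> bin N q k"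
  shows "0 \<le> x \<and> x \<le> 1"
proof (cases "k = N + 1")
  case True then show ?thesis using x q by (simp add: bin_top)
next
  case False
  have "0 \<le> real (k - 1) * q / real N" using q by simp
  moreover have "real k * q / real N \<le> 1"
  proof -
    have "real k * q \<le> real N * 1" using k False q by (intro mult_mono) auto
    then show ?thesis using N by (simp add: divide_le_eq)
  qed
  ultimately show ?thesis using x False by (auto simp: bin_low)
qed

lemma binx_unique_lt:
  assumes N: "N \<ge> 1" and q: "0 < q" "q < 1" and ik: "i < k" "k \<le> N + 1"
    and x: "x \<in> binx N q i" "x \<in> binx N q k"
  shows False
proof (cases "i = 0")
  case True
  then show False using x ik bin_sub01[OF N q, of k x] by (auto simp: binx_def)
next
  case False
  have xi: "x < real i * q / real N" using x(1) False ik by (auto simp: binx_def bin_low)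
  show False
  proof (cases "k = N + 1")
    case True
    have "real i * q / real N \<le> q"
    proof -
      have "real i * q \<le> real N * q" using ik True q by (intro mult_right_mono) auto
      then show ?thesis using N by (simp add: divide_le_eq mult.commute)
    qed
    then show False using x(2) True xi by (auto simp: binx_def bin_top)
  next
    case kN: False
    have "real i * q / real N \<le> real (k - 1) * q / real N"
      using ik q N by (intro divide_right_mono mult_right_mono) auto
    then show False using x(2) kN ik xi by (auto simp: binx_def bin_low)
  qed
qed

lemma binx_unique:
  assumes N: "N \<ge> 1" and q: "0 < q" "q < 1" and "i \<le> N + 1" "k \<le> N + 1"
    and "x \<in> binx N q i" "x \<in> binx N q k"
  shows "i = k"
  using binx_unique_lt[OF N q, of i k x] binx_unique_lt[OF N q, of k i x] assms
  by (metis linorder_neqE_nat)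

lemma binx_exists:
  assumes N: "N \<ge> 1" and q: "0 < q" "q < 1"
  shows "\<exists>i. i \<le> N + 1 \<and> x \<in> binx N q i"
proof (cases "0 \<le> x \<and> x \<le> 1")
  case False
  then show ?thesis by (intro exI[of _ 0]) (auto simp: binx_def)
next
  case x01: True
  show ?thesis
  proof (cases "q \<le> x")
    case True
    then show ?thesis using x01 by (intro exI[of _ "N+1"]) (auto simp: binx_def bin_top)
  next
    case False
    define k where "k = nat \<lfloor>x * real N / q\<rfloor>"
    have fl0: "0 \<le> \<lfloor>x * real N / q\<rfloor>" using x01 q by simp
    have kle: "real k \<le> x * real N / q" unfolding k_def using fl0 by linarith
    have klt: "x * real N / q < real k + 1" unfolding k_def using fl0 by linarith
    have "x * real N / q < real N" using False q N by (simp add: divide_less_eq)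
    then have kN: "k < N" using kle by linarith
    have 1: "real k * q / real N \<le> x" using kle q N by (simp add: field_simps)
    have 2: "x < (real k + 1) * q / real N" using klt q N by (simp add: field_simps)
    show ?thesis
      using 1 2 kN by (intro exI[of _ "k+1"]) (auto simp: binx_def bin_low add.commute)
  qed
qed

lemma measure_event:
  assumes N: "N \<ge> 1" and q: "0 < q" "q < 1"
    and PPhi: "\<And>g p. g \<in> PiE {1..N} (\<lambda>_. {0..N+1}) \<Longrightarrow> p \<in> PiE {1..N} (\<lambda>j. binx N q (g j)) \<Longrightarrow> P p = Phi g"
  shows "measure (pmodel N) {p\<in>space (pmodel N). P p}
     = (\<Sum>g\<in>PiE {1..N} (\<lambda>_. {1..N+1}). if Phi g then \<Prod>j\<in>{1..N}. wt N q (g j) else 0)"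
proof -
  let ?G = "PiE {1..N} (\<lambda>_::nat. {0..N+1})"
  let ?F = "PiE {1..N} (\<lambda>_::nat. {1..N+1})"
  let ?bx = "\<lambda>g. PiE {1..N} (\<lambda>j. binx N q (g j))"
  interpret M: prob_space "pmodel N" by (rule prob_pmodel)
  have sp: "space (pmodel N) = PiE {1..N} (\<lambda>_. UNIV)"
    unfolding pmodel_unif by (simp add: space_PiM unif_def)
  have seteq: "{p\<in>space (pmodel N). P p} = (\<Union>g\<in>{g\<in>?G. Phi g}. ?bx g)"
  proof (intro set_eqI iffI)
    fix p assume p: "p \<in> {p\<in>space (pmodel N). P p}"
    define g where "g = (\<lambda>j\<in>{1..N}. SOME i. i \<le> N + 1 \<and> p j \<in> binx N q i)"
    have gj: "g j \<le> N + 1 \<and> p j \<in> binx N q (g j)" if "j \<in> {1..N}" for j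
      unfolding g_def using that someI_ex[OF binx_exists[OF N q, of "p j"]] by simp
    have gG: "g \<in> ?G" using gj unfolding g_def by (auto simp: PiE_iff)
    have pb: "p \<in> ?bx g" using gj p sp by (auto simp: PiE_iff)
    have "Phi g" using PPhi[OF gG pb] p by simp
    then show "p \<in> (\<Union>g\<in>{g\<in>?G. Phi g}. ?bx g)" using gG pb by blast
  next
    fix p assume "p \<in> (\<Union>g\<in>{g\<in>?G. Phi g}. ?bx g)"
    then obtain g where g: "g \<in> ?G" "Phi g" "p \<in> ?bx g" by blast
    then have "p \<in> space (pmodel N)" unfolding sp by (auto simp: PiE_iff)
    then show "p \<in> {p\<in>space (pmodel N). P p}" using PPhi[OF g(1) g(3)] g(2) by simp
  qed
  have disj: "disjoint_family_on ?bx {g\<in>?G. Phi g}"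
  unfolding disjoint_family_on_def proof (intro ballI impI)
    fix g1 g2 assume g1: "g1 \<in> {g\<in>?G. Phi g}" and g2: "g2 \<in> {g\<in>?G. Phi g}" and ne: "g1 \<noteq> g2"
    then obtain j where j: "j \<in> {1..N}" "g1 j \<noteq> g2 j"
      by (metis (no_types, lifting) PiE_iff mem_Collect_eq extensionalityI)
    show "?bx g1 \<inter> ?bx g2 = {}"
    proof (rule ccontr)
      assume "?bx g1 \<inter> ?bx g2 \<noteq> {}"
      then obtain p where "p \<in> ?bx g1" "p \<in> ?bx g2" by blast
      then have "p j \<in> binx N q (g1 j)" "p j \<in> binx N q (g2 j)" using j by (auto simp: PiE_iff)
      moreover have "g1 j \<le> N + 1" "g2 j \<le> N + 1" using g1 g2 j by (auto simp: PiE_iff)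
      ultimately have "g1 j = g2 j" using binx_unique[OF N q] by blast
      then show False using j by simp
    qed
  qed
  have sets: "?bx ` {g\<in>?G. Phi g} \<subseteq> sets (pmodel N)"
    unfolding pmodel_unif by (auto intro!: sets_PiM_I_finite simp: unif_def binx_sets)
  have "measure (pmodel N) {p\<in>space (pmodel N). P p} = (\<Sum>g\<in>{g\<in>?G. Phi g}. measure (pmodel N) (?bx g))"
    unfolding seteq by (rule M.finite_measure_finite_Union[OF _ sets disj]) (simp add: finite_PiE)
  also have "\<dots> = (\<Sum>g\<in>{g\<in>?G. Phi g}. \<Prod>j\<in>{1..N}. wt N q (g j))"
    by (intro sum.cong refl measure_box[OF N q]) auto
  also have "\<dots> = (\<Sum>g\<in>?G. if Phi g then \<Prod>j\<in>{1..N}. wt N q (g j) else 0)"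
    by (rule sum.inter_filter) (simp add: finite_PiE)
  also have "\<dots> = (\<Sum>g\<in>?F. if Phi g then \<Prod>j\<in>{1..N}. wt N q (g j) else 0)"
  proof (rule sum.mono_neutral_right)
    show "finite ?G" by (simp add: finite_PiE)
    show "?F \<subseteq> ?G" by (auto simp: PiE_iff)
    show "\<forall>g\<in>?G - ?F. (if Phi g then \<Prod>j\<in>{1..N}. wt N q (g j) else 0) = 0"
    proof
      fix g assume g: "g \<in> ?G - ?F"
      then obtain j where j: "j \<in> {1..N}" "g j = 0" by (auto simp: PiE_iff)
      have "(\<Prod>j\<in>{1..N}. wt N q (g j)) = 0"
        by (rule prod_zero) (use j in \<open>auto simp: wt_def intro!: bexI[of _ j]\<close>)
      then show "(if Phi g then \<Prod>j\<in>{1..N}. wt N q (g j) else 0) = 0" by simp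
    qed
  qed
  finally show ?thesis .
qed



lemma decomp_l:
  fixes N l :: nat and q :: real and Q :: "nat set \<Rightarrow> (nat \<Rightarrow> nat) \<Rightarrow> bool"
  assumes lN: "l \<le> N"
  shows "(\<Sum>f\<in>PiE {1..N} (\<lambda>_. {1..N+1}).
            if card {j\<in>{1..N}. f j \<le> l} = l \<and> Q {j\<in>{1..N}. f j \<le> l} (restrict f ({1..N} - {j\<in>{1..N}. f j \<le> l}))
            then \<Prod>j\<in>{1..N}. wt N q (f j) else 0)
    = (\<Sum>S\<in>{S. S \<subseteq> {1..N} \<and> card S = l}. (real l * q / real N) ^ l *
         (\<Sum>h\<in>PiE ({1..N} - S) (\<lambda>_. {l+1..N+1}). if Q S h then \<Prod>j\<in>{1..N} - S. wt N q (h j) else 0))"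
proof -
  let ?I = "{1..N}"
  let ?F = "PiE ?I (\<lambda>_. {1..N+1})"
  let ?k = "\<lambda>f. {j\<in>?I. f j \<le> l}"
  let ?h = "\<lambda>f. if card (?k f) = l \<and> Q (?k f) (restrict f (?I - ?k f)) then \<Prod>j\<in>?I. wt N q (f j) else 0"
  let ?R = "\<lambda>S. (real l * q / real N) ^ l *
         (\<Sum>h\<in>PiE (?I - S) (\<lambda>_. {l+1..N+1}). if Q S h then \<Prod>j\<in>?I - S. wt N q (h j) else 0)"
  have "sum ?h ?F = (\<Sum>S\<in>Pow ?I. sum ?h {f\<in>?F. ?k f = S})"
    by (rule sum.group[symmetric]) (auto simp: finite_PiE)
  also have "\<dots> = (\<Sum>S\<in>Pow ?I. if card S = l then ?R S else 0)"
  proof (intro sum.cong refl)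
    fix S assume S: "S \<in> Pow ?I"
    define Y where "Y = (\<lambda>j. if j \<in> S then {1..l} else {l+1..N+1})"
    have setF: "{f\<in>?F. ?k f = S} = PiE ?I Y"
      using S lN unfolding Y_def
      apply (intro set_eqI)
      apply (simp add: PiE_iff)
      apply (intro iffI conjI)
      apply (auto split: if_splits)
      by (metis atLeastAtMost_iff not_less_eq_eq)
    show "sum ?h {f\<in>?F. ?k f = S} = (if card S = l then ?R S else 0)"
    proof (cases "card S = l")
      case False
      have "sum ?h {f\<in>?F. ?k f = S} = 0" using False by (intro sum.neutral) auto
      then show ?thesis using False by simp
    next
      case True
      have fS: "finite S" using S finite_subset by auto
      have IS: "?I = S \<union> (?I - S)" using S by auto
      have wS: "(\<Prod>j\<in>S. wt N q (f j)) = (q / real N) ^ l" if "f \<in> PiE ?I Y" for f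
      proof -
        have "(\<Prod>j\<in>S. wt N q (f j)) = (\<Prod>j\<in>S. q / real N)"
        proof (intro prod.cong refl)
          fix j assume "j \<in> S"
          moreover have "f j \<in> Y j" using PiE_mem[OF that, of j] \<open>j \<in> S\<close> S by auto
          ultimately have "1 \<le> f j \<and> f j \<le> l" unfolding Y_def by auto
          then show "wt N q (f j) = q / real N" using lN unfolding wt_def by auto
        qed
        then show ?thesis using True by simp
      qed
      have "sum ?h {f\<in>?F. ?k f = S} = (\<Sum>f\<in>PiE (S \<union> (?I - S)) Y.
            (\<lambda>g. (q / real N) ^ l) (restrict f S) *
            (\<lambda>h. if Q S h then \<Prod>j\<in>?I - S. wt N q (h j) else 0) (restrict f (?I - S)))"
      proof (unfold setF, subst IS[symmetric], intro sum.cong refl)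
        fix f assume f: "f \<in> PiE ?I Y"
        have kf: "?k f = S" using f setF by auto
        have "(\<Prod>j\<in>?I. wt N q (f j)) = (\<Prod>j\<in>S. wt N q (f j)) * (\<Prod>j\<in>?I - S. wt N q (f j))"
          using IS fS by (metis (no_types, lifting) Diff_disjoint finite_Diff finite_atLeastAtMost prod.union_disjoint)
        also have "\<dots> = (q / real N) ^ l * (\<Prod>j\<in>?I - S. wt N q (restrict f (?I - S) j))"
          using wS[OF f] by simp
        finally show "?h f = (\<lambda>g. (q / real N) ^ l) (restrict f S) *
            (\<lambda>h. if Q S h then \<Prod>j\<in>?I - S. wt N q (h j) else 0) (restrict f (?I - S))"
          unfolding kf using True by simp
      qed
      also have "\<dots> = (\<Sum>g\<in>PiE S Y. (q / real N) ^ l) *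
            (\<Sum>h\<in>PiE (?I - S) Y. if Q S h then \<Prod>j\<in>?I - S. wt N q (h j) else 0)"
        by (rule sum_PiE_split) (use fS in auto)
      also have "PiE S Y = PiE S (\<lambda>_. {1..l})" unfolding Y_def by (intro PiE_cong) auto
      also have "PiE (?I - S) Y = PiE (?I - S) (\<lambda>_. {l+1..N+1})" unfolding Y_def by (intro PiE_cong) auto
      also have "(\<Sum>g\<in>PiE S (\<lambda>_. {1..l}). (q / real N) ^ l) = (real l * q / real N) ^ l"
        using fS True by (simp add: card_PiE power_mult_distrib[symmetric] times_divide_eq_right)
      finally have X: "sum ?h {f\<in>?F. ?k f = S} = ?R S" .
      show ?thesis by (rule trans[OF X]) (simp only: if_P[OF True])
    qed
  qed
  also have "\<dots> = (\<Sum>S\<in>{S\<in>Pow ?I. card S = l}. ?R S)"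
    by (rule sum.inter_filter[symmetric]) simp
  also have "{S\<in>Pow ?I. card S = l} = {S. S \<subseteq> ?I \<and> card S = l}" by auto
  finally show ?thesis .
qed

lemma sum_wt_top:
  assumes N: "N \<ge> 1" and lN: "l \<le> N"
  shows "(\<Sum>i\<in>{l+1..N+1}. wt N q i) = 1 - real l * q / real N"
proof -
  have e: "{l+1..N+1} = insert (N+1) {l+1..N}" using lN by auto
  have "(\<Sum>i\<in>{l+1..N+1}. wt N q i) = (1 - q) + (\<Sum>i\<in>{l+1..N}. wt N q i)"
    unfolding e by (simp add: wt_def)
  also have "(\<Sum>i\<in>{l+1..N}. wt N q i) = (\<Sum>i\<in>{l+1..N}. q / real N)"
    by (intro sum.cong refl) (auto simp: wt_def)
  also have "\<dots> = real (N - l) * q / real N" by simp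
  also have "(1 - q) + real (N - l) * q / real N = 1 - real l * q / real N"
    using N lN by (simp add: of_nat_diff field_simps)
  finally show ?thesis .
qed

lemma part1a:
  assumes N: "N \<ge> 1" and lN: "l \<le> N"
  shows "(\<Sum>f\<in>PiE {1..N} (\<lambda>_. {1..N+1}). if card {j\<in>{1..N}. f j \<le> l} = l then \<Prod>j\<in>{1..N}. wt N q (f j) else 0)
     = real (N choose l) * (q * real l / real N) ^ l * (1 - q * real l / real N) ^ (N - l)"
proof -
  have "(\<Sum>f\<in>PiE {1..N} (\<lambda>_. {1..N+1}). if card {j\<in>{1..N}. f j \<le> l} = l then \<Prod>j\<in>{1..N}. wt N q (f j) else 0)
     = (\<Sum>f\<in>PiE {1..N} (\<lambda>_. {1..N+1}).
            if card {j\<in>{1..N}. f j \<le> l} = l \<and> (\<lambda>S h. True) {j\<in>{1..N}. f j \<le> l} (restrict f ({1..N} - {j\<in>{1..N}. f j \<le> l}))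
            then \<Prod>j\<in>{1..N}. wt N q (f j) else 0)" by simp
  also have "\<dots> = (\<Sum>S\<in>{S. S \<subseteq> {1..N} \<and> card S = l}. (real l * q / real N) ^ l *
         (\<Sum>h\<in>PiE ({1..N} - S) (\<lambda>_. {l+1..N+1}). if (\<lambda>S h. True) S h then \<Prod>j\<in>{1..N} - S. wt N q (h j) else 0))"
    by (rule decomp_l[OF lN])
  also have "\<dots> = (\<Sum>S\<in>{S. S \<subseteq> {1..N} \<and> card S = l}. (real l * q / real N) ^ l * (1 - real l * q / real N) ^ (N - l))"
  proof (intro sum.cong refl)
    fix S assume S: "S \<in> {S. S \<subseteq> {1..N} \<and> card S = l}"
    have cT: "card ({1..N} - S) = N - l" using S by (auto simp: card_Diff_subset finite_subset)
    have "(\<Sum>h\<in>PiE ({1..N} - S) (\<lambda>_. {l+1..N+1}). \<Prod>j\<in>{1..N} - S. wt N q (h j))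
        = (\<Prod>j\<in>{1..N} - S. \<Sum>i\<in>{l+1..N+1}. wt N q i)"
      by (rule prod_sum_PiE[symmetric]) auto
    also have "\<dots> = (1 - real l * q / real N) ^ (N - l)" using cT by (simp only: sum_wt_top[OF N lN] prod_constant)
    finally show "(real l * q / real N) ^ l *
         (\<Sum>h\<in>PiE ({1..N} - S) (\<lambda>_. {l+1..N+1}). if (\<lambda>S h. True) S h then \<Prod>j\<in>{1..N} - S. wt N q (h j) else 0)
         = (real l * q / real N) ^ l * (1 - real l * q / real N) ^ (N - l)" by simp
  qed
  also have "\<dots> = real (N choose l) * (q * real l / real N) ^ l * (1 - q * real l / real N) ^ (N - l)"
    by (simp add: n_subsets mult.commute)
  finally show ?thesis .
qed

lemma inner_lsum:
  fixes T :: "nat set" and l N :: nat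
  assumes N: "N \<ge> 1" and lN: "l \<le> N" and T: "T \<subseteq> {1..N}"
  shows "(\<Sum>h\<in>PiE T (\<lambda>_. {l+1..N+1}). if (\<forall>i\<in>{l+1..N}. card {j\<in>T. h j \<le> i} < i - l)
            then \<Prod>j\<in>T. wt N q (h j) else 0)
       = Lsum (N - l) T (\<lambda>_. q / real N) (\<lambda>_. 1 - q)"
proof -
  have "(\<Sum>h\<in>PiE T (\<lambda>_. {l+1..N+1}). if (\<forall>i\<in>{l+1..N}. card {j\<in>T. h j \<le> i} < i - l)
            then \<Prod>j\<in>T. wt N q (h j) else 0)
      = (\<Sum>h\<in>PiE T (\<lambda>_. {1..N-l+1}). (\<lambda>h. if (\<forall>i\<in>{l+1..N}. card {j\<in>T. h j \<le> i} < i - l)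
            then \<Prod>j\<in>T. wt N q (h j) else 0) (\<lambda>j\<in>T. h j + l))"
    by (rule sum_PiE_shift[OF lN])
  also have "\<dots> = Lsum (N - l) T (\<lambda>_. q / real N) (\<lambda>_. 1 - q)"
    unfolding Lsum_def
  proof (intro sum.cong refl)
    fix h assume h: "h \<in> PiE T (\<lambda>_. {1..N-l+1})"
    have hj: "1 \<le> h j \<and> h j \<le> N - l + 1" if "j \<in> T" for j using PiE_mem[OF h that] by auto
    have c: "card {j\<in>T. (\<lambda>j\<in>T. h j + l) j \<le> i' + l} = cle T h i'" for i'
    proof -
      have "{j\<in>T. (\<lambda>j\<in>T. h j + l) j \<le> i' + l} = {j\<in>T. h j \<le> i'}" by auto
      then show ?thesis unfolding cle_def by simp
    qed
    have g: "(\<forall>i\<in>{l+1..N}. card {j\<in>T. (\<lambda>j\<in>T. h j + l) j \<le> i} < i - l) \<longleftrightarrow> goodE (N - l) T h"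
      unfolding goodE_def
    proof
      assume A: "\<forall>i\<in>{l+1..N}. card {j\<in>T. (\<lambda>j\<in>T. h j + l) j \<le> i} < i - l"
      show "\<forall>i\<in>{1..N - l}. cle T h i < i"
      proof
        fix i' assume i': "i' \<in> {1..N - l}"
        then have "i' + l \<in> {l+1..N}" by auto
        then have "card {j\<in>T. (\<lambda>j\<in>T. h j + l) j \<le> i' + l} < i' + l - l" using A by blast
        then show "cle T h i' < i'" using c by simp
      qed
    next
      assume B: "\<forall>i\<in>{1..N - l}. cle T h i < i"
      show "\<forall>i\<in>{l+1..N}. card {j\<in>T. (\<lambda>j\<in>T. h j + l) j \<le> i} < i - l"
      proof
        fix i assume i: "i \<in> {l+1..N}"
        then have "i - l \<in> {1..N - l}" by auto
        then have "cle T h (i - l) < i - l" using B by blast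
        moreover have "i = (i - l) + l" using i by auto
        ultimately show "card {j\<in>T. (\<lambda>j\<in>T. h j + l) j \<le> i} < i - l" using c[of "i - l"] by metis
      qed
    qed
    have w: "(\<Prod>j\<in>T. wt N q ((\<lambda>j\<in>T. h j + l) j)) = (\<Prod>j\<in>T. if h j \<le> N - l then q / real N else 1 - q)"
    proof (intro prod.cong refl)
      fix j assume j: "j \<in> T"
      show "wt N q ((\<lambda>j\<in>T. h j + l) j) = (if h j \<le> N - l then q / real N else 1 - q)"
        using hj[OF j] j lN by (auto simp: wt_def)
    qed
    show "(\<lambda>h. if (\<forall>i\<in>{l+1..N}. card {j\<in>T. h j \<le> i} < i - l) then \<Prod>j\<in>T. wt N q (h j) else 0) (\<lambda>j\<in>T. h j + l)
        = (if goodE (N - l) T h then \<Prod>j\<in>T. if h j \<le> N - l then q / real N else 1 - q else 0)"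
      using g w by simp
  qed
  finally show ?thesis .
qed

lemma part1b:
  assumes N: "N \<ge> 1" and lN: "l \<le> N"
  shows "(\<Sum>f\<in>PiE {1..N} (\<lambda>_. {1..N+1}).
            if card {j\<in>{1..N}. f j \<le> l} = l \<and>
               (\<lambda>S h. \<forall>i\<in>{l+1..N}. card {j\<in>{1..N} - S. h j \<le> i} < i - l) {j\<in>{1..N}. f j \<le> l} (restrict f ({1..N} - {j\<in>{1..N}. f j \<le> l}))
            then \<Prod>j\<in>{1..N}. wt N q (f j) else 0)
     = real (N choose l) * (real l * q / real N) ^ l *
        ((1 - real l * q / real N) ^ (N - l) - real (N - l) * (q / real N) * (1 - real l * q / real N) ^ (N - l - 1))"
proof -
  let ?s = "1 - real l * q / real N"
  have s: "real (N - l) * (q / real N) + (1 - q) = ?s"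
    using N lN by (simp add: of_nat_diff field_simps)
  have "(\<Sum>f\<in>PiE {1..N} (\<lambda>_. {1..N+1}).
            if card {j\<in>{1..N}. f j \<le> l} = l \<and>
               (\<lambda>S h. \<forall>i\<in>{l+1..N}. card {j\<in>{1..N} - S. h j \<le> i} < i - l) {j\<in>{1..N}. f j \<le> l} (restrict f ({1..N} - {j\<in>{1..N}. f j \<le> l}))
            then \<Prod>j\<in>{1..N}. wt N q (f j) else 0)
     = (\<Sum>S\<in>{S. S \<subseteq> {1..N} \<and> card S = l}. (real l * q / real N) ^ l *
         (\<Sum>h\<in>PiE ({1..N} - S) (\<lambda>_. {l+1..N+1}). if (\<forall>i\<in>{l+1..N}. card {j\<in>{1..N} - S. h j \<le> i} < i - l) then \<Prod>j\<in>{1..N} - S. wt N q (h j) else 0))"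
    by (rule decomp_l[OF lN])
  also have "\<dots> = (\<Sum>S\<in>{S. S \<subseteq> {1..N} \<and> card S = l}. (real l * q / real N) ^ l *
        (?s ^ (N - l) - real (N - l) * (q / real N) * ?s ^ (N - l - 1)))"
  proof (intro sum.cong refl arg_cong2[where f = "(*)"])
    fix S assume S: "S \<in> {S. S \<subseteq> {1..N} \<and> card S = l}"
    have cT: "card ({1..N} - S) = N - l" using S by (auto simp: card_Diff_subset finite_subset)
    have "(\<Sum>h\<in>PiE ({1..N} - S) (\<lambda>_. {l+1..N+1}). if (\<forall>i\<in>{l+1..N}. card {j\<in>{1..N} - S. h j \<le> i} < i - l) then \<Prod>j\<in>{1..N} - S. wt N q (h j) else 0)
        = Lsum (N - l) ({1..N} - S) (\<lambda>_. q / real N) (\<lambda>_. 1 - q)"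
      by (rule inner_lsum[OF N lN]) auto
    also have "\<dots> = (\<Prod>j\<in>{1..N} - S. real (N - l) * (q / real N) + (1 - q))
        - (\<Sum>j\<in>{1..N} - S. q / real N * (\<Prod>k\<in>({1..N} - S) - {j}. real (N - l) * (q / real N) + (1 - q)))"
      by (rule Lsum_formula) (use cT in auto)
    also have "\<dots> = ?s ^ (N - l) - real (N - l) * (q / real N) * ?s ^ (N - l - 1)"
    proof -
      have "(\<Sum>j\<in>{1..N} - S. q / real N * (\<Prod>k\<in>({1..N} - S) - {j}. real (N - l) * (q / real N) + (1 - q)))
          = (\<Sum>j\<in>{1..N} - S. q / real N * ?s ^ (N - l - 1))"
        by (intro sum.cong refl) (simp only: s prod_constant card_Diff_singleton cT finite_Diff finite_atLeastAtMost)
      then show ?thesis unfolding s using cT by simp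
    qed
    finally show "(\<Sum>h\<in>PiE ({1..N} - S) (\<lambda>_. {l+1..N+1}). if (\<forall>i\<in>{l+1..N}. card {j\<in>{1..N} - S. h j \<le> i} < i - l) then \<Prod>j\<in>{1..N} - S. wt N q (h j) else 0)
        = ?s ^ (N - l) - real (N - l) * (q / real N) * ?s ^ (N - l - 1)" .
  qed
  also have "\<dots> = real (N choose l) * (real l * q / real N) ^ l * (?s ^ (N - l) - real (N - l) * (q / real N) * ?s ^ (N - l - 1))"
    by (simp add: n_subsets)
  finally show ?thesis .
qed

lemma kt_equiv:
  assumes f: "f \<in> PiE {1..N} (\<lambda>_. {1..N+1})" and lN: "l \<le> N"
  shows "(Max {i\<in>{0..N}. card {j\<in>{1..N}. f j \<in> {1..i}} = i} = l) \<longleftrightarrow>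
    (card {j\<in>{1..N}. f j \<le> l} = l \<and>
     (\<lambda>S h. \<forall>i\<in>{l+1..N}. card {j\<in>{1..N} - S. h j \<le> i} < i - l) {j\<in>{1..N}. f j \<le> l} (restrict f ({1..N} - {j\<in>{1..N}. f j \<le> l})))"
proof -
  define phi where "phi = (\<lambda>i. card {j\<in>{1..N}. f j \<le> i})"
  have f1: "1 \<le> f j" if "j \<in> {1..N}" for j using PiE_mem[OF f that] by auto
  have eqs: "{j\<in>{1..N}. f j \<in> {1..i}} = {j\<in>{1..N}. f j \<le> i}" for i using f1 by auto
  have A: "{i\<in>{0..N}. card {j\<in>{1..N}. f j \<in> {1..i}} = i} = {i\<in>{0..N}. phi i = i}"
    unfolding eqs phi_def ..
  have phi0: "phi 0 = 0" unfolding phi_def using f1 by fastforce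
  have fin: "finite {i\<in>{0..N}. phi i = i}" by auto
  have ne: "{i\<in>{0..N}. phi i = i} \<noteq> {}" using phi0 by force
  have mono: "phi i \<le> phi (Suc i)" for i unfolding phi_def by (intro card_mono) auto
  have "phi N \<le> card {1..N}" unfolding phi_def by (intro card_mono) auto
  then have endb: "phi N + 0 \<le> N" by simp
  have "(Max {i\<in>{0..N}. phi i = i} = l) \<longleftrightarrow> (phi l = l \<and> (\<forall>i\<in>{l+1..N}. phi i \<noteq> i))"
    unfolding Max_eq_iff[OF fin ne] using lN by force
  also have "\<dots> \<longleftrightarrow> (phi l = l \<and> (\<forall>i\<in>{l+1..N}. phi i < i))"
    using walk_equiv[of N phi 0 l] mono endb by auto
  also have "\<dots> \<longleftrightarrow> (card {j\<in>{1..N}. f j \<le> l} = l \<and>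
     (\<lambda>S h. \<forall>i\<in>{l+1..N}. card {j\<in>{1..N} - S. h j \<le> i} < i - l) {j\<in>{1..N}. f j \<le> l} (restrict f ({1..N} - {j\<in>{1..N}. f j \<le> l})))"
  proof (cases "phi l = l")
    case False then show ?thesis unfolding phi_def by simp
  next
    case True
    let ?K = "{j\<in>{1..N}. f j \<le> l}"
    have "phi i = l + card {j\<in>{1..N} - ?K. restrict f ({1..N} - ?K) j \<le> i}" if "l + 1 \<le> i" for i
    proof -
      have "{j\<in>{1..N}. f j \<le> i} = ?K \<union> {j\<in>{1..N} - ?K. restrict f ({1..N} - ?K) j \<le> i}"
        using that by auto
      moreover have "?K \<inter> {j\<in>{1..N} - ?K. restrict f ({1..N} - ?K) j \<le> i} = {}" by auto
      ultimately have "phi i = card ?K + card {j\<in>{1..N} - ?K. restrict f ({1..N} - ?K) j \<le> i}"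
        unfolding phi_def by (simp add: card_Un_disjoint)
      then show ?thesis using True unfolding phi_def by simp
    qed
    then show ?thesis using True unfolding phi_def by auto
  qed
  finally show ?thesis unfolding A .
qed

lemma load_box:
  assumes N: "N \<ge> 1" and q: "0 < q" "q < 1" and g: "g \<in> PiE {1..N} (\<lambda>_. {0..N+1})"
    and p: "p \<in> PiE {1..N} (\<lambda>j. binx N q (g j))" and S: "S \<subseteq> {1..N}" and i: "1 \<le> i" "i \<le> N + 1"
  shows "load S N q p i = card {j\<in>S. g j = i}"
proof -
  have "{j\<in>S. p j \<in> bin N q i} = {j\<in>S. g j = i}"
  proof (intro set_eqI iffI)
    fix j assume j: "j \<in> {j\<in>S. p j \<in> bin N q i}"
    then have jI: "j \<in> {1..N}" using S by auto
    have "p j \<in> binx N q (g j)" using PiE_mem[OF p jI] by simp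
    moreover have "p j \<in> binx N q i" using j i by (auto simp: binx_def)
    moreover have "g j \<le> N + 1" using PiE_mem[OF g jI] by simp
    ultimately have "g j = i" using binx_unique[OF N q] i by blast
    then show "j \<in> {j\<in>S. g j = i}" using j by auto
  next
    fix j assume j: "j \<in> {j\<in>S. g j = i}"
    then have jI: "j \<in> {1..N}" using S by auto
    have "p j \<in> binx N q (g j)" using PiE_mem[OF p jI] by simp
    then show "j \<in> {j\<in>S. p j \<in> bin N q i}" using j i by (auto simp: binx_def)
  qed
  then show ?thesis unfolding load_def by simp
qed

lemma loadsum_box:
  assumes N: "N \<ge> 1" and q: "0 < q" "q < 1" and g: "g \<in> PiE {1..N} (\<lambda>_. {0..N+1})"
    and p: "p \<in> PiE {1..N} (\<lambda>j. binx N q (g j))" and S: "S \<subseteq> {1..N}"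
  shows "i \<le> N + 1 \<Longrightarrow> loadsum S N q p 1 i = card {j\<in>S. g j \<in> {1..i}}"
proof (induction i)
  case 0
  then show ?case unfolding loadsum_def by simp
next
  case (Suc i)
  have fS: "finite S" using S finite_subset by auto
  have "loadsum S N q p 1 (Suc i) = loadsum S N q p 1 i + load S N q p (Suc i)"
    unfolding loadsum_def by simp
  also have "\<dots> = card {j\<in>S. g j \<in> {1..i}} + card {j\<in>S. g j = Suc i}"
    using Suc load_box[OF N q g p S, of "Suc i"] by simp
  also have "\<dots> = card {j\<in>S. g j \<in> {1..Suc i}}"
  proof -
    have "{j\<in>S. g j \<in> {1..Suc i}} = {j\<in>S. g j \<in> {1..i}} \<union> {j\<in>S. g j = Suc i}" by auto
    moreover have "{j\<in>S. g j \<in> {1..i}} \<inter> {j\<in>S. g j = Suc i} = {}" by auto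
    ultimately show ?thesis using fS by (simp add: card_Un_disjoint)
  qed
  finally show ?case .
qed

lemma aux_div: "(s::real) \<noteq> 0 \<Longrightarrow> a * x = a / s * (s * x)" by simp

lemma part1_main:
  assumes N: "N \<ge> 1" and q: "0 < q" "q < 1" and lN: "l \<le> N"
  shows "measure (pmodel N) {p \<in> space (pmodel N). ktilde N q p = l}
              = (1 - q) / (1 - q + real (N - l) * q / real N)
                * measure (pmodel N) {p \<in> space (pmodel N). loadsum {1..N} N q p 1 l = l}
          \<and> measure (pmodel N) {p \<in> space (pmodel N). loadsum {1..N} N q p 1 l = l}
              = real (N choose l) * (q * real l / real N) ^ l
                * (1 - q * real l / real N) ^ (N - l)"
proof -
  let ?F = "PiE {1..N} (\<lambda>_::nat. {1..N+1})"
  let ?W = "\<lambda>f. \<Prod>j\<in>{1..N}. wt N q (f j)"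
  let ?s = "1 - real l * q / real N"
  have fF: "1 \<le> f j" if "f \<in> ?F" "j \<in> {1..N}" for f j using PiE_mem[OF that] by auto
  have A: "measure (pmodel N) {p \<in> space (pmodel N). loadsum {1..N} N q p 1 l = l}
      = (\<Sum>f\<in>?F. if card {j\<in>{1..N}. f j \<in> {1..l}} = l then ?W f else 0)"
    by (rule measure_event[OF N q]) (use loadsum_box[OF N q] lN in auto)
  also have "\<dots> = (\<Sum>f\<in>?F. if card {j\<in>{1..N}. f j \<le> l} = l then ?W f else 0)"
  proof (intro sum.cong refl)
    fix f assume "f \<in> ?F"
    then have "{j\<in>{1..N}. f j \<in> {1..l}} = {j\<in>{1..N}. f j \<le> l}" using fF by auto
    then show "(if card {j\<in>{1..N}. f j \<in> {1..l}} = l then ?W f else 0) = (if card {j\<in>{1..N}. f j \<le> l} = l then ?W f else 0)"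
      by simp
  qed
  also have "\<dots> = real (N choose l) * (q * real l / real N) ^ l * (1 - q * real l / real N) ^ (N - l)"
    by (rule part1a[OF N lN])
  finally have Aeq: "measure (pmodel N) {p \<in> space (pmodel N). loadsum {1..N} N q p 1 l = l}
      = real (N choose l) * (q * real l / real N) ^ l * (1 - q * real l / real N) ^ (N - l)" .
  have B: "measure (pmodel N) {p \<in> space (pmodel N). ktilde N q p = l}
      = (\<Sum>f\<in>?F. if Max {i\<in>{0..N}. card {j\<in>{1..N}. f j \<in> {1..i}} = i} = l then ?W f else 0)"
  proof (rule measure_event[OF N q])
    fix g p assume g: "g \<in> PiE {1..N} (\<lambda>_. {0..N+1})" and p: "p \<in> PiE {1..N} (\<lambda>j. binx N q (g j))"
    have "{i\<in>{0..N}. loadsum {1..N} N q p 1 i = i} = {i\<in>{0..N}. card {j\<in>{1..N}. g j \<in> {1..i}} = i}"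
      using loadsum_box[OF N q g p] by auto
    then show "(ktilde N q p = l) = (Max {i\<in>{0..N}. card {j\<in>{1..N}. g j \<in> {1..i}} = i} = l)"
      unfolding ktilde_def by simp
  qed
  also have "\<dots> = (\<Sum>f\<in>?F.
            if card {j\<in>{1..N}. f j \<le> l} = l \<and>
               (\<lambda>S h. \<forall>i\<in>{l+1..N}. card {j\<in>{1..N} - S. h j \<le> i} < i - l) {j\<in>{1..N}. f j \<le> l} (restrict f ({1..N} - {j\<in>{1..N}. f j \<le> l}))
            then ?W f else 0)"
    by (intro sum.cong refl) (simp only: kt_equiv[OF _ lN])
  also have "\<dots> = real (N choose l) * (real l * q / real N) ^ l * (?s ^ (N - l) - real (N - l) * (q / real N) * ?s ^ (N - l - 1))"
    by (rule part1b[OF N lN])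
  finally have Beq: "measure (pmodel N) {p \<in> space (pmodel N). ktilde N q p = l}
      = real (N choose l) * (real l * q / real N) ^ l * (?s ^ (N - l) - real (N - l) * (q / real N) * ?s ^ (N - l - 1))" .
  have spos: "?s > 0"
  proof -
    have "real l * q \<le> real N * q" using lN q by (intro mult_right_mono) auto
    then have "real l * q / real N \<le> q" using N by (simp add: divide_le_eq mult.commute)
    then show ?thesis using q by linarith
  qed
  have seq: "1 - q + real (N - l) * q / real N = ?s" using N lN by (simp add: of_nat_diff field_simps)
  have key: "?s ^ (N - l) - real (N - l) * (q / real N) * ?s ^ (N - l - 1) = (1 - q) / ?s * ?s ^ (N - l)"
  proof (cases "N - l")
    case 0
    then have "l = N" using lN by simp
    then show ?thesis using N q by simp
  next
    case (Suc k)
    have e1: "?s ^ (N - l) = ?s * ?s ^ k" using Suc by simp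
    have e2: "?s - real (N - l) * (q / real N) = 1 - q" using seq by simp
    have e3: "N - l - 1 = k" using Suc by simp
    have "?s ^ (N - l) - real (N - l) * (q / real N) * ?s ^ (N - l - 1)
        = (?s - real (N - l) * (q / real N)) * ?s ^ k" unfolding e1 e3 by (simp add: algebra_simps)
    also have "\<dots> = (1 - q) * ?s ^ k" unfolding e2 ..
    also have "\<dots> = (1 - q) / ?s * ?s ^ (N - l)" unfolding e1 by (rule aux_div) (use spos in linarith)
    finally show ?thesis .
  qed
  show ?thesis
    unfolding Aeq Beq seq key by (simp add: mult.commute mult.left_commute)
qed



lemma inner_gen:
  fixes T :: "nat set" and l N :: nat and omega :: "nat \<Rightarrow> nat \<Rightarrow> real"
  assumes lN: "l \<le> N"
    and om: "\<And>j i. j \<in> T \<Longrightarrow> l + 1 \<le> i \<Longrightarrow> i \<le> N + 1 \<Longrightarrow> omega j i = (if i \<le> N then a j else b j)"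
  shows "(\<Sum>h\<in>PiE T (\<lambda>_. {l+1..N+1}). if (\<forall>i\<in>{l+1..N}. card {j\<in>T. h j \<le> i} + l < i)
            then \<Prod>j\<in>T. omega j (h j) else 0)
       = Lsum (N - l) T a b"
proof -
  have "(\<Sum>h\<in>PiE T (\<lambda>_. {l+1..N+1}). if (\<forall>i\<in>{l+1..N}. card {j\<in>T. h j \<le> i} + l < i)
            then \<Prod>j\<in>T. omega j (h j) else 0)
      = (\<Sum>h\<in>PiE T (\<lambda>_. {1..N-l+1}). (\<lambda>h. if (\<forall>i\<in>{l+1..N}. card {j\<in>T. h j \<le> i} + l < i)
            then \<Prod>j\<in>T. omega j (h j) else 0) (\<lambda>j\<in>T. h j + l))"
    by (rule sum_PiE_shift[OF lN])
  also have "\<dots> = Lsum (N - l) T a b"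
    unfolding Lsum_def
  proof (intro sum.cong refl)
    fix h assume h: "h \<in> PiE T (\<lambda>_. {1..N-l+1})"
    have hj: "1 \<le> h j \<and> h j \<le> N - l + 1" if "j \<in> T" for j using PiE_mem[OF h that] by auto
    have c: "card {j\<in>T. (\<lambda>j\<in>T. h j + l) j \<le> i' + l} = cle T h i'" for i'
    proof -
      have "{j\<in>T. (\<lambda>j\<in>T. h j + l) j \<le> i' + l} = {j\<in>T. h j \<le> i'}" by auto
      then show ?thesis unfolding cle_def by simp
    qed
    have g: "(\<forall>i\<in>{l+1..N}. card {j\<in>T. (\<lambda>j\<in>T. h j + l) j \<le> i} + l < i) \<longleftrightarrow> goodE (N - l) T h"
      unfolding goodE_def
    proof
      assume A: "\<forall>i\<in>{l+1..N}. card {j\<in>T. (\<lambda>j\<in>T. h j + l) j \<le> i} + l < i"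
      show "\<forall>i\<in>{1..N - l}. cle T h i < i"
      proof
        fix i' assume i': "i' \<in> {1..N - l}"
        then have "i' + l \<in> {l+1..N}" by auto
        then have "card {j\<in>T. (\<lambda>j\<in>T. h j + l) j \<le> i' + l} + l < i' + l" using A by blast
        then show "cle T h i' < i'" using c by simp
      qed
    next
      assume B: "\<forall>i\<in>{1..N - l}. cle T h i < i"
      show "\<forall>i\<in>{l+1..N}. card {j\<in>T. (\<lambda>j\<in>T. h j + l) j \<le> i} + l < i"
      proof
        fix i assume i: "i \<in> {l+1..N}"
        then have "i - l \<in> {1..N - l}" by auto
        then have "cle T h (i - l) < i - l" using B by blast
        moreover have "i = (i - l) + l" using i by auto
        ultimately show "card {j\<in>T. (\<lambda>j\<in>T. h j + l) j \<le> i} + l < i" using c[of "i - l"] by (metis add_less_cancel_right)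
      qed
    qed
    have w: "(\<Prod>j\<in>T. omega j ((\<lambda>j\<in>T. h j + l) j)) = (\<Prod>j\<in>T. if h j \<le> N - l then a j else b j)"
    proof (intro prod.cong refl)
      fix j assume j: "j \<in> T"
      have "omega j (h j + l) = (if h j + l \<le> N then a j else b j)"
        using hj[OF j] lN by (intro om[OF j]) auto
      then show "omega j ((\<lambda>j\<in>T. h j + l) j) = (if h j \<le> N - l then a j else b j)"
        using j lN by auto
    qed
    show "(\<lambda>h. if (\<forall>i\<in>{l+1..N}. card {j\<in>T. h j \<le> i} + l < i) then \<Prod>j\<in>T. omega j (h j) else 0) (\<lambda>j\<in>T. h j + l)
        = (if goodE (N - l) T h then \<Prod>j\<in>T. if h j \<le> N - l then a j else b j else 0)"
      using g w by simp
  qed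
  finally show ?thesis .
qed

lemma num_sum:
  fixes N c m :: nat and q :: real and H0 :: "nat set"
  assumes N: "N \<ge> 1" and cN: "c \<le> N" and H0: "H0 \<subseteq> {1..N}"
  shows "(\<Sum>f\<in>PiE {1..N} (\<lambda>_. {1..N+1}).
            if card {j\<in>H0. f j = N+1} = m \<and> card {j\<in>{1..N}. f j \<le> c} = 0 \<and>
               (\<forall>i\<in>{c+1..N}. card {j\<in>{1..N}. f j \<le> i} + c < i)
            then \<Prod>j\<in>{1..N}. wt N q (f j) else 0)
    = (\<Sum>M\<in>{M. M \<subseteq> H0 \<and> card M = m}. (1 - q) ^ m *
          Lsum (N - c) ({1..N} - M) (\<lambda>_. q / real N) (\<lambda>j. if j \<in> H0 then 0 else 1 - q))"
proof -
  let ?I = "{1..N}"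
  let ?F = "PiE ?I (\<lambda>_. {1..N+1})"
  let ?Fc = "PiE ?I (\<lambda>_. {c+1..N+1})"
  let ?W = "\<lambda>f. \<Prod>j\<in>?I. wt N q (f j)"
  let ?R = "\<lambda>f. \<forall>i\<in>{c+1..N}. card {j\<in>?I. f j \<le> i} + c < i"
  let ?k = "\<lambda>f. {j\<in>H0. f j = N+1}"
  let ?b = "\<lambda>j. if j \<in> H0 then 0 else 1 - q"
  have fH0: "finite H0" using H0 finite_subset by auto
  have step1: "(\<Sum>f\<in>?F. if card (?k f) = m \<and> card {j\<in>?I. f j \<le> c} = 0 \<and> ?R f then ?W f else 0)
      = (\<Sum>f\<in>?Fc. if card (?k f) = m \<and> ?R f then ?W f else 0)"
  proof (rule sum.mono_neutral_cong_right)
    show "finite ?F" by (simp add: finite_PiE)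
    show "?Fc \<subseteq> ?F" by (intro PiE_mono) auto
    show "\<forall>f\<in>?F - ?Fc. (if card (?k f) = m \<and> card {j\<in>?I. f j \<le> c} = 0 \<and> ?R f then ?W f else 0) = 0"
    proof
      fix f assume f: "f \<in> ?F - ?Fc"
      then obtain j where j: "j \<in> ?I" "f j \<notin> {c+1..N+1}" by (auto simp: PiE_iff)
      have "f j \<in> {1..N+1}" using f j by (auto simp: PiE_iff)
      then have "f j \<le> c" using j by auto
      then have "j \<in> {j\<in>?I. f j \<le> c}" using j by auto
      then have "{j\<in>?I. f j \<le> c} \<noteq> {}" by blast
      then have "card {j\<in>?I. f j \<le> c} \<noteq> 0" by simp
      then show "(if card (?k f) = m \<and> card {j\<in>?I. f j \<le> c} = 0 \<and> ?R f then ?W f else 0) = 0"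
        by (simp only: simp_thms if_False)
    qed
    show "(if card (?k f) = m \<and> card {j\<in>?I. f j \<le> c} = 0 \<and> ?R f then ?W f else 0)
        = (if card (?k f) = m \<and> ?R f then ?W f else 0)" if "f \<in> ?Fc" for f
    proof -
      have "\<not> f j \<le> c" if "j \<in> ?I" for j using PiE_mem[OF \<open>f \<in> ?Fc\<close> that] by simp
      then have "{j\<in>?I. f j \<le> c} = {}" by blast
      then show ?thesis by simp
    qed
  qed
  let ?h = "\<lambda>f. if card (?k f) = m \<and> ?R f then ?W f else 0"
  have "sum ?h ?Fc = (\<Sum>M\<in>Pow H0. sum ?h {f\<in>?Fc. ?k f = M})"
    by (rule sum.group[symmetric]) (auto simp: finite_PiE fH0)
  also have "\<dots> = (\<Sum>M\<in>Pow H0. if card M = m then (1 - q) ^ m *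
          Lsum (N - c) (?I - M) (\<lambda>_. q / real N) ?b else 0)"
  proof (intro sum.cong refl)
    fix M assume M: "M \<in> Pow H0"
    have MI: "M \<subseteq> ?I" using M H0 by auto
    have fM: "finite M" using MI finite_subset by auto
    define Z where "Z = (\<lambda>j. if j \<in> M then {N+1} else if j \<in> H0 then {c+1..N} else {c+1..N+1})"
    have setF: "{f\<in>?Fc. ?k f = M} = PiE ?I Z"
    proof (intro set_eqI iffI)
      fix f assume f: "f \<in> {f\<in>?Fc. ?k f = M}"
      show "f \<in> PiE ?I Z"
        unfolding PiE_iff
      proof (intro conjI ballI)
        fix j assume j: "j \<in> ?I"
        have fj: "f j \<in> {c+1..N+1}" using f j by (auto simp: PiE_iff)
        show "f j \<in> Z j"
        proof (cases "j \<in> M")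
          case True then show ?thesis using f unfolding Z_def by auto
        next
          case False
          then have "j \<notin> H0 \<or> f j \<noteq> N + 1" using f by auto
          then show ?thesis using fj False unfolding Z_def by auto
        qed
      next
        show "f \<in> extensional ?I" using f by (auto simp: PiE_iff)
      qed
    next
      fix f assume f: "f \<in> PiE ?I Z"
      have fj: "f j \<in> Z j" if "j \<in> ?I" for j using PiE_mem[OF f that] .
      have "f \<in> ?Fc"
        unfolding PiE_iff
      proof (intro conjI ballI)
        fix j assume j: "j \<in> ?I"
        show "f j \<in> {c+1..N+1}" using fj[OF j] cN unfolding Z_def by (auto split: if_splits)
      next
        show "f \<in> extensional ?I" using f by (auto simp: PiE_iff)
      qed
      moreover have "?k f = M"
      proof (intro set_eqI iffI)
        fix j assume "j \<in> ?k f"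
        then have "j \<in> H0" "f j = N + 1" by auto
        then show "j \<in> M" using fj[of j] H0 unfolding Z_def by (auto split: if_splits)
      next
        fix j assume "j \<in> M"
        then show "j \<in> ?k f" using fj[of j] M MI unfolding Z_def by auto
      qed
      ultimately show "f \<in> {f\<in>?Fc. ?k f = M}" by simp
    qed
    show "sum ?h {f\<in>?Fc. ?k f = M} = (if card M = m then (1 - q) ^ m *
          Lsum (N - c) (?I - M) (\<lambda>_. q / real N) ?b else 0)"
    proof (cases "card M = m")
      case False
      have "sum ?h {f\<in>?Fc. ?k f = M} = 0" using False by (intro sum.neutral) auto
      then show ?thesis using False by simp
    next
      case True
      let ?T = "?I - M"
      have IS: "?I = M \<union> ?T" using MI by auto
      let ?R' = "\<lambda>h. \<forall>i\<in>{c+1..N}. card {j\<in>?T. h j \<le> i} + c < i"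
      have "sum ?h {f\<in>?Fc. ?k f = M} = (\<Sum>f\<in>PiE (M \<union> ?T) Z.
            (\<lambda>g. (1 - q) ^ m) (restrict f M) *
            (\<lambda>h. if ?R' h then \<Prod>j\<in>?T. wt N q (h j) else 0) (restrict f ?T))"
      proof (unfold setF, subst IS[symmetric], intro sum.cong refl)
        fix f assume f: "f \<in> PiE ?I Z"
        have fj: "f j \<in> Z j" if "j \<in> ?I" for j using PiE_mem[OF f that] .
        have kf: "?k f = M" using f setF by auto
        have fM: "f j = N + 1" if "j \<in> M" for j using fj[of j] that MI unfolding Z_def by auto
        have "?W f = (\<Prod>j\<in>M \<union> ?T. wt N q (f j))"
          by (rule arg_cong[where f = "\<lambda>A. \<Prod>j\<in>A. wt N q (f j)"]) (rule IS)
        also have "\<dots> = (\<Prod>j\<in>M. wt N q (f j)) * (\<Prod>j\<in>?T. wt N q (f j))"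
          by (rule prod.union_disjoint) (use finite_subset[OF MI] in auto)
        also have "(\<Prod>j\<in>M. wt N q (f j)) = (1 - q) ^ m"
          using True fM by (simp add: wt_def)
        finally have Wf: "?W f = (1 - q) ^ m * (\<Prod>j\<in>?T. wt N q (restrict f ?T j))" by simp
        have Rf: "?R f \<longleftrightarrow> ?R' (restrict f ?T)"
        proof -
          have "{j\<in>?I. f j \<le> i} = {j\<in>?T. restrict f ?T j \<le> i}" if "i \<le> N" for i
            using that fM by auto
          then show ?thesis by auto
        qed
        show "?h f = (\<lambda>g. (1 - q) ^ m) (restrict f M) *
            (\<lambda>h. if ?R' h then \<Prod>j\<in>?T. wt N q (h j) else 0) (restrict f ?T)"
          unfolding kf Wf Rf using True by simp
      qed
      also have "\<dots> = (\<Sum>g\<in>PiE M Z. (1 - q) ^ m) *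
            (\<Sum>h\<in>PiE ?T Z. if ?R' h then \<Prod>j\<in>?T. wt N q (h j) else 0)"
        by (rule sum_PiE_split) (use fM in auto)
      also have "(\<Sum>g\<in>PiE M Z. (1 - q) ^ m) = (1 - q) ^ m"
      proof -
        have "card (PiE M Z) = 1" using fM by (simp add: card_PiE Z_def)
        then show ?thesis by simp
      qed
      also have "(\<Sum>h\<in>PiE ?T Z. if ?R' h then \<Prod>j\<in>?T. wt N q (h j) else 0)
          = (\<Sum>h\<in>PiE ?T (\<lambda>_. {c+1..N+1}). if ?R' h then \<Prod>j\<in>?T. (\<lambda>j i. if i \<le> N then q / real N else ?b j) j (h j) else 0)"
      proof (rule sum.mono_neutral_cong_left)
        show "finite (PiE ?T (\<lambda>_. {c+1..N+1}))" by (simp add: finite_PiE)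
        show "PiE ?T Z \<subseteq> PiE ?T (\<lambda>_. {c+1..N+1})"
          unfolding Z_def by (intro PiE_mono) auto
        show "\<forall>h\<in>PiE ?T (\<lambda>_. {c+1..N+1}) - PiE ?T Z.
            (if ?R' h then \<Prod>j\<in>?T. (\<lambda>j i. if i \<le> N then q / real N else ?b j) j (h j) else 0) = 0"
        proof
          fix h assume h: "h \<in> PiE ?T (\<lambda>_. {c+1..N+1}) - PiE ?T Z"
          then obtain j where j: "j \<in> ?T" "h j \<notin> Z j" by (auto simp: PiE_iff)
          have "h j \<in> {c+1..N+1}" using h j by (auto simp: PiE_iff)
          then have "j \<in> H0" "h j = N + 1" using j unfolding Z_def by (auto split: if_splits)
          then have "(\<Prod>j\<in>?T. (\<lambda>j i. if i \<le> N then q / real N else ?b j) j (h j)) = 0"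
            using j by (intro prod_zero) (auto intro!: bexI[of _ j])
          then show "(if ?R' h then \<Prod>j\<in>?T. (\<lambda>j i. if i \<le> N then q / real N else ?b j) j (h j) else 0) = 0" by simp
        qed
        show "(if ?R' h then \<Prod>j\<in>?T. wt N q (h j) else 0)
            = (if ?R' h then \<Prod>j\<in>?T. (\<lambda>j i. if i \<le> N then q / real N else ?b j) j (h j) else 0)"
          if h: "h \<in> PiE ?T Z" for h
        proof -
          have "(\<Prod>j\<in>?T. wt N q (h j)) = (\<Prod>j\<in>?T. (\<lambda>j i. if i \<le> N then q / real N else ?b j) j (h j))"
          proof (intro prod.cong refl)
            fix j assume j: "j \<in> ?T"
            have "h j \<in> Z j" using PiE_mem[OF h j] .
            then show "wt N q (h j) = (\<lambda>j i. if i \<le> N then q / real N else ?b j) j (h j)"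
              using j unfolding Z_def wt_def by (auto split: if_splits)
          qed
          then show ?thesis by simp
        qed
      qed
      also have "\<dots> = Lsum (N - c) ?T (\<lambda>_. q / real N) ?b"
        by (rule inner_gen[OF cN]) auto
      finally show ?thesis using True by simp
    qed
  qed
  also have "\<dots> = (\<Sum>M\<in>{M\<in>Pow H0. card M = m}. (1 - q) ^ m * Lsum (N - c) (?I - M) (\<lambda>_. q / real N) ?b)"
    by (rule sum.inter_filter[symmetric]) (simp add: fH0)
  also have "{M\<in>Pow H0. card M = m} = {M. M \<subseteq> H0 \<and> card M = m}" by auto
  finally show ?thesis using step1 by simp
qed

lemma prod_if_H0:
  fixes A B :: real
  assumes "finite T"
  shows "(\<Prod>j\<in>T. if j \<in> H0 then A else B) = A ^ card (T \<inter> H0) * B ^ card (T - H0)"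
  using assms by (simp add: prod.If_cases Int_def Diff_eq)

lemma den_sum:
  fixes N m :: nat and q :: real and H0 :: "nat set"
  assumes N: "N \<ge> 1" and H0: "H0 \<subseteq> {1..N}"
  shows "(\<Sum>f\<in>PiE {1..N} (\<lambda>_. {1..N+1}). if card {j\<in>H0. f j = N+1} = m then \<Prod>j\<in>{1..N}. wt N q (f j) else 0)
    = real (card H0 choose m) * ((1 - q) ^ m * q ^ (card H0 - m))"
proof -
  let ?I = "{1..N}"
  let ?F = "PiE ?I (\<lambda>_. {1..N+1})"
  let ?k = "\<lambda>f. {j\<in>H0. f j = N+1}"
  let ?h = "\<lambda>f. if card (?k f) = m then \<Prod>j\<in>?I. wt N q (f j) else 0"
  have fH0: "finite H0" using H0 finite_subset by auto
  have s1: "(\<Sum>i\<in>{1..N}. wt N q i) = q" using N by (simp add: wt_def)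
  have s2: "(\<Sum>i\<in>{1..N+1}. wt N q i) = 1" using sum_wt_top[OF N, of 0 q] by simp
  have "sum ?h ?F = (\<Sum>M\<in>Pow H0. sum ?h {f\<in>?F. ?k f = M})"
    by (rule sum.group[symmetric]) (auto simp: finite_PiE fH0)
  also have "\<dots> = (\<Sum>M\<in>Pow H0. if card M = m then (1 - q) ^ m * q ^ (card H0 - m) else 0)"
  proof (intro sum.cong refl)
    fix M assume M: "M \<in> Pow H0"
    have MI: "M \<subseteq> ?I" using M H0 by auto
    define Z where "Z = (\<lambda>j. if j \<in> M then {N+1} else if j \<in> H0 then {1..N} else {1..N+1})"
    have setF: "{f\<in>?F. ?k f = M} = PiE ?I Z"
    proof (intro set_eqI iffI)
      fix f assume f: "f \<in> {f\<in>?F. ?k f = M}"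
      show "f \<in> PiE ?I Z"
        unfolding PiE_iff
      proof (intro conjI ballI)
        fix j assume j: "j \<in> ?I"
        have fj: "f j \<in> {1..N+1}" using f j by (auto simp: PiE_iff)
        show "f j \<in> Z j"
        proof (cases "j \<in> M")
          case True then show ?thesis using f unfolding Z_def by auto
        next
          case False
          then have "j \<notin> H0 \<or> f j \<noteq> N + 1" using f by auto
          then show ?thesis using fj False unfolding Z_def by auto
        qed
      next
        show "f \<in> extensional ?I" using f by (auto simp: PiE_iff)
      qed
    next
      fix f assume f: "f \<in> PiE ?I Z"
      have fj: "f j \<in> Z j" if "j \<in> ?I" for j using PiE_mem[OF f that] .
      have "f \<in> ?F"
        unfolding PiE_iff
      proof (intro conjI ballI)
        fix j assume j: "j \<in> ?I"
        show "f j \<in> {1..N+1}" using fj[OF j] unfolding Z_def by (auto split: if_splits)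
      next
        show "f \<in> extensional ?I" using f by (auto simp: PiE_iff)
      qed
      moreover have "?k f = M"
      proof (intro set_eqI iffI)
        fix j assume "j \<in> ?k f"
        then have "j \<in> H0" "f j = N + 1" by auto
        then show "j \<in> M" using fj[of j] H0 unfolding Z_def by (auto split: if_splits)
      next
        fix j assume "j \<in> M"
        then show "j \<in> ?k f" using fj[of j] M MI unfolding Z_def by auto
      qed
      ultimately show "f \<in> {f\<in>?F. ?k f = M}" by simp
    qed
    show "sum ?h {f\<in>?F. ?k f = M} = (if card M = m then (1 - q) ^ m * q ^ (card H0 - m) else 0)"
    proof (cases "card M = m")
      case False
      have "sum ?h {f\<in>?F. ?k f = M} = 0" using False by (intro sum.neutral) auto
      then show ?thesis using False by simp
    next
      case True
      have "sum ?h {f\<in>?F. ?k f = M} = (\<Sum>f\<in>PiE ?I Z. \<Prod>j\<in>?I. wt N q (f j))"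
        unfolding setF using setF True by (intro sum.cong refl) auto
      also have "\<dots> = (\<Prod>j\<in>?I. \<Sum>i\<in>Z j. wt N q i)"
        by (rule prod_sum_PiE[symmetric]) (auto simp: Z_def)
      also have "\<dots> = (\<Prod>j\<in>?I. if j \<in> M then 1 - q else (if j \<in> H0 then q else 1))"
        by (intro prod.cong refl) (simp add: Z_def s1 s2 wt_def)
      also have "\<dots> = (\<Prod>j\<in>?I \<inter> M. 1 - q) * (\<Prod>j\<in>?I - M. if j \<in> H0 then q else 1)"
        by (simp add: prod.If_cases Int_def Diff_eq)
      also have "(\<Prod>j\<in>?I - M. if j \<in> H0 then q else 1) = q ^ card ((?I - M) \<inter> H0) * 1 ^ card ((?I - M) - H0)"
        by (rule prod_if_H0) simp
      also have "?I \<inter> M = M" using MI by auto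
      also have "(?I - M) \<inter> H0 = H0 - M" using H0 by auto
      also have "card (H0 - M) = card H0 - m" using True M fH0 by (simp add: card_Diff_subset finite_subset)
      finally show ?thesis using True by simp
    qed
  qed
  also have "\<dots> = (\<Sum>M\<in>{M\<in>Pow H0. card M = m}. (1 - q) ^ m * q ^ (card H0 - m))"
    by (rule sum.inter_filter[symmetric]) (simp add: fH0)
  also have "\<dots> = real (card H0 choose m) * ((1 - q) ^ m * q ^ (card H0 - m))"
  proof -
    have "{M\<in>Pow H0. card M = m} = {M. M \<subseteq> H0 \<and> card M = m}" by auto
    then show ?thesis using fH0 by (simp add: n_subsets)
  qed
  finally show ?thesis .
qed

lemma lsum_val:
  fixes N c m :: nat and q :: real and H0 M :: "nat set"
  assumes N: "N \<ge> 1" and H0: "H0 \<subseteq> {1..N}" and M: "M \<subseteq> H0" "card M = m" and cm: "c \<le> m"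
  defines "A \<equiv> real (N - c) * (q / real N)"
  defines "B \<equiv> real (N - c) * (q / real N) + (1 - q)"
  shows "Lsum (N - c) ({1..N} - M) (\<lambda>_. q / real N) (\<lambda>j. if j \<in> H0 then 0 else 1 - q)
    = A ^ (card H0 - m) * B ^ (N - card H0)
      - (real (card H0 - m) * (q / real N) * A ^ (card H0 - m - 1) * B ^ (N - card H0)
         + real (N - card H0) * (q / real N) * A ^ (card H0 - m) * B ^ (N - card H0 - 1))"
proof -
  let ?I = "{1..N}"
  let ?T = "?I - M"
  let ?s = "\<lambda>j. real (N - c) * (q / real N) + (if j \<in> H0 then 0 else 1 - q)"
  have fH0: "finite H0" using H0 finite_subset by auto
  have fM: "finite M" using M fH0 finite_subset by auto
  have cH0: "card H0 \<le> N" using card_mono[OF _ H0] by simp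
  have cTH: "card (H0 - M) = card H0 - m" using M fH0 by (simp add: card_Diff_subset finite_subset)
  have cH1: "card (?I - H0) = N - card H0" using H0 by (simp add: card_Diff_subset finite_subset)
  have cT: "card ?T = N - m" using M H0 fM by (simp add: card_Diff_subset)
  have "card ?T \<le> N - c" using cT cm by simp
  then have L: "Lsum (N - c) ?T (\<lambda>_. q / real N) (\<lambda>j. if j \<in> H0 then 0 else 1 - q)
      = (\<Prod>j\<in>?T. ?s j) - (\<Sum>j\<in>?T. q / real N * (\<Prod>k\<in>?T - {j}. ?s k))"
    by (intro Lsum_formula) auto
  have sj: "?s j = (if j \<in> H0 then A else B)" for j unfolding A_def B_def by simp
  have P: "(\<Prod>j\<in>U. ?s j) = A ^ card (U \<inter> H0) * B ^ card (U - H0)" if "finite U" for U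
    unfolding sj by (rule prod_if_H0[OF that])
  have T1: "?T \<inter> H0 = H0 - M" "?T - H0 = ?I - H0" using H0 M by auto
  have split: "?T = (H0 - M) \<union> (?I - H0)" "(H0 - M) \<inter> (?I - H0) = {}" using H0 M by auto
  have "(\<Sum>j\<in>?T. q / real N * (\<Prod>k\<in>?T - {j}. ?s k))
      = (\<Sum>j\<in>H0 - M. q / real N * (\<Prod>k\<in>?T - {j}. ?s k)) + (\<Sum>j\<in>?I - H0. q / real N * (\<Prod>k\<in>?T - {j}. ?s k))"
    unfolding split(1) by (rule sum.union_disjoint) (use split(2) fH0 in auto)
  also have "(\<Sum>j\<in>H0 - M. q / real N * (\<Prod>k\<in>?T - {j}. ?s k))
      = (\<Sum>j\<in>H0 - M. q / real N * (A ^ (card H0 - m - 1) * B ^ (N - card H0)))"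
  proof (intro sum.cong refl)
    fix j assume j: "j \<in> H0 - M"
    have "(?T - {j}) \<inter> H0 = (H0 - M) - {j}" "(?T - {j}) - H0 = ?I - H0" using H0 M j by auto
    moreover have "card ((H0 - M) - {j}) = card H0 - m - 1" using j cTH fH0 by (simp add: card_Diff_singleton)
    ultimately show "q / real N * (\<Prod>k\<in>?T - {j}. ?s k) = q / real N * (A ^ (card H0 - m - 1) * B ^ (N - card H0))"
      using P[of "?T - {j}"] cH1 by simp
  qed
  also have "\<dots> = real (card H0 - m) * (q / real N) * A ^ (card H0 - m - 1) * B ^ (N - card H0)"
    using cTH by simp
  also have "(\<Sum>j\<in>?I - H0. q / real N * (\<Prod>k\<in>?T - {j}. ?s k))
      = (\<Sum>j\<in>?I - H0. q / real N * (A ^ (card H0 - m) * B ^ (N - card H0 - 1)))"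
  proof (intro sum.cong refl)
    fix j assume j: "j \<in> ?I - H0"
    have "(?T - {j}) \<inter> H0 = H0 - M" "(?T - {j}) - H0 = (?I - H0) - {j}" using H0 M j by auto
    moreover have "card ((?I - H0) - {j}) = N - card H0 - 1" using j cH1 by (simp add: card_Diff_singleton)
    ultimately show "q / real N * (\<Prod>k\<in>?T - {j}. ?s k) = q / real N * (A ^ (card H0 - m) * B ^ (N - card H0 - 1))"
      using P[of "?T - {j}"] cTH by simp
  qed
  also have "\<dots> = real (N - card H0) * (q / real N) * A ^ (card H0 - m) * B ^ (N - card H0 - 1)"
    using cH1 by simp
  finally have S: "(\<Sum>j\<in>?T. q / real N * (\<Prod>k\<in>?T - {j}. ?s k))
      = real (card H0 - m) * (q / real N) * A ^ (card H0 - m - 1) * B ^ (N - card H0)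
        + real (N - card H0) * (q / real N) * A ^ (card H0 - m) * B ^ (N - card H0 - 1)" .
  have "(\<Prod>j\<in>?T. ?s j) = A ^ (card H0 - m) * B ^ (N - card H0)"
    using P[of ?T] T1 cTH cH1 by simp
  then show ?thesis unfolding L S by simp
qed

lemma kp_equiv:
  assumes f: "f \<in> PiE {1..N} (\<lambda>_. {1..N+1})" and cN: "c \<le> N"
    and ctop: "c \<le> card {j\<in>{1..N}. f j = N + 1}"
  shows "(Max {i\<in>{c..N}. card {j\<in>{1..N}. f j \<in> {1..i}} = i - c} = c) \<longleftrightarrow>
    (card {j\<in>{1..N}. f j \<le> c} = 0 \<and> (\<forall>i\<in>{c+1..N}. card {j\<in>{1..N}. f j \<le> i} + c < i))"
proof -
  define phi where "phi = (\<lambda>i. card {j\<in>{1..N}. f j \<le> i})"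
  have fj: "f j \<in> {1..N+1}" if "j \<in> {1..N}" for j using PiE_mem[OF f that] by simp
  have eqs: "{j\<in>{1..N}. f j \<in> {1..i}} = {j\<in>{1..N}. f j \<le> i}" for i using fj by auto
  have A: "{i\<in>{c..N}. card {j\<in>{1..N}. f j \<in> {1..i}} = i - c} = {i\<in>{c..N}. phi i + c = i}"
    unfolding eqs phi_def by auto
  have mono: "phi i \<le> phi (Suc i)" for i unfolding phi_def by (intro card_mono) auto
  have part: "phi N + card {j\<in>{1..N}. f j = N + 1} = N"
  proof -
    have "{1..N} = {j\<in>{1..N}. f j \<le> N} \<union> {j\<in>{1..N}. f j = N + 1}" using fj by fastforce
    moreover have "{j\<in>{1..N}. f j \<le> N} \<inter> {j\<in>{1..N}. f j = N + 1} = {}" by auto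
    ultimately have "card {1..N} = phi N + card {j\<in>{1..N}. f j = N + 1}"
      unfolding phi_def by (metis (no_types, lifting) card_Un_disjoint finite_Un finite_atLeastAtMost)
    then show ?thesis by simp
  qed
  have endb: "phi N + c \<le> N" using part ctop by linarith
  have fin: "finite {i\<in>{c..N}. phi i + c = i}" by auto
  obtain j0 where "j0 \<in> {c..N}" "phi j0 + c = j0" using ivt_walk[of N phi c c] mono endb cN by force
  then have ne: "{i\<in>{c..N}. phi i + c = i} \<noteq> {}" by auto
  have m1: "c \<in> {i\<in>{c..N}. phi i + c = i} \<longleftrightarrow> phi c = 0" using cN by auto
  have m2: "(\<forall>a\<in>{i\<in>{c..N}. phi i + c = i}. a \<le> c) \<longleftrightarrow> (\<forall>i\<in>{c+1..N}. phi i + c \<noteq> i)"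
  proof
    assume H: "\<forall>a\<in>{i\<in>{c..N}. phi i + c = i}. a \<le> c"
    show "\<forall>i\<in>{c+1..N}. phi i + c \<noteq> i"
    proof (intro ballI notI)
      fix i assume i: "i \<in> {c+1..N}" and e: "phi i + c = i"
      then have "i \<in> {i\<in>{c..N}. phi i + c = i}" by auto
      then have "i \<le> c" using H by blast
      then show False using i by auto
    qed
  next
    assume H: "\<forall>i\<in>{c+1..N}. phi i + c \<noteq> i"
    show "\<forall>a\<in>{i\<in>{c..N}. phi i + c = i}. a \<le> c"
    proof
      fix a assume a: "a \<in> {i\<in>{c..N}. phi i + c = i}"
      show "a \<le> c"
      proof (rule ccontr)
        assume "\<not> a \<le> c"
        then have "a \<in> {c+1..N}" using a by auto
        then show False using H a by auto
      qed
    qed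
  qed
  have "(Max {i\<in>{c..N}. phi i + c = i} = c) \<longleftrightarrow> (phi c = 0 \<and> (\<forall>i\<in>{c+1..N}. phi i + c \<noteq> i))"
    unfolding Max_eq_iff[OF fin ne] m1 m2 ..
  also have "\<dots> \<longleftrightarrow> (phi c = 0 \<and> (\<forall>i\<in>{c+1..N}. phi i + c < i))"
    using walk_equiv[of N phi c c] mono endb by auto
  finally show ?thesis unfolding A phi_def .
qed

lemma alg2:
  fixes Ak Bn k2 nq Bm qk rk X Y :: real
  assumes "Ak = qk * rk" "k2 = qk * (rk * X)" "nq * Bm = Bn * Y" "qk \<noteq> 0"
  shows "(Ak * Bn - (k2 * Bn + nq * Ak * Bm)) / qk = Bn * rk * (1 - X - Y)"
proof -
  have "Ak * Bn - (k2 * Bn + nq * Ak * Bm) = qk * (Bn * rk * (1 - X - Y))"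
  proof -
    have "nq * Ak * Bm = Ak * (nq * Bm)" by (simp add: algebra_simps)
    then show ?thesis using assms(1,2,3) by (simp add: algebra_simps)
  qed
  then show ?thesis using assms(4) by simp
qed

lemma alg3:
  fixes r d n s q :: real
  assumes "r = d / n" "n \<noteq> 0" "d \<noteq> 0"
  shows "s * (q / n) * (q ^ k * r ^ k) = q ^ Suc k * (r ^ Suc k * (s / d))"
proof -
  have "q ^ Suc k * (r ^ Suc k * (s / d)) = s * q * q ^ k * r ^ k * (r / d)" by (simp add: algebra_simps)
  also have "r / d = 1 / n" using assms by simp
  finally show ?thesis by (simp add: algebra_simps)
qed

lemma alg4:
  fixes b e n s q :: real
  assumes "b = e / n" "n \<noteq> 0" "e \<noteq> 0"
  shows "s * (q / n) * b ^ k = b ^ Suc k * (s * q / e)"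
proof -
  have "b ^ Suc k * (s * q / e) = s * q * b ^ k * (b / e)" by (simp add: algebra_simps)
  also have "b / e = 1 / n" using assms by simp
  finally show ?thesis by (simp add: algebra_simps)
qed

lemma final_alg:
  fixes N c m N0 :: nat and q :: real
  assumes N: "N \<ge> 1" and q: "0 < q" "q < 1" and c: "1 \<le> c" "c \<le> m" "m \<le> N0" "N0 \<le> N"
  defines "A \<equiv> real (N - c) * (q / real N)"
  defines "B \<equiv> real (N - c) * (q / real N) + (1 - q)"
  shows "(A ^ (N0 - m) * B ^ (N - N0)
      - (real (N0 - m) * (q / real N) * A ^ (N0 - m - 1) * B ^ (N - N0)
         + real (N - N0) * (q / real N) * A ^ (N0 - m) * B ^ (N - N0 - 1))) / q ^ (N0 - m)
    = (1 - real c * q / real N) ^ (N - N0) * (1 - real c / real N) ^ (N0 - m)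
      * (1 - real (N0 - m) / real (N - c) - real (N - N0) * q / (real N - real c * q))"
proof -
  let ?r = "1 - real c / real N"
  have cN: "c \<le> N" using c by simp
  have Nr: "real N > 0" using N by simp
  have Aeq: "A = q * ?r" unfolding A_def using cN Nr by (simp add: of_nat_diff field_simps)
  have Beq: "B = 1 - real c * q / real N" unfolding B_def using cN Nr by (simp add: of_nat_diff field_simps)
  have Bpos: "real N - real c * q > 0"
  proof -
    have "real c * q \<le> real N * q" by (rule mult_right_mono) (use cN q in auto)
    moreover have "real N * q < real N" using Nr q by simp
    ultimately show ?thesis by linarith
  qed
  have h1: "A ^ (N0 - m) = q ^ (N0 - m) * ?r ^ (N0 - m)" unfolding Aeq by (simp add: power_mult_distrib)
  have h2: "real (N0 - m) * (q / real N) * A ^ (N0 - m - 1) = q ^ (N0 - m) * (?r ^ (N0 - m) * (real (N0 - m) / real (N - c)))"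
  proof (cases "N0 - m")
    case 0 then show ?thesis by simp
  next
    case (Suc k)
    have Nc: "real (N - c) > 0" using Suc c by simp
    have rr: "?r = real (N - c) / real N" using cN Nr by (simp add: of_nat_diff field_simps)
    have "real (N0 - m) * (q / real N) * A ^ (N0 - m - 1) = real (Suc k) * (q / real N) * (q ^ k * ?r ^ k)"
      unfolding Aeq Suc by (simp add: power_mult_distrib)
    also have "\<dots> = q ^ Suc k * (?r ^ Suc k * (real (Suc k) / real (N - c)))"
      by (rule alg3[OF rr]) (use Nc Nr in auto)
    finally show ?thesis unfolding Suc .
  qed
  have h3: "real (N - N0) * (q / real N) * B ^ (N - N0 - 1) = B ^ (N - N0) * (real (N - N0) * q / (real N - real c * q))"
  proof (cases "N - N0")
    case 0 then show ?thesis by simp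
  next
    case (Suc k)
    have BB: "B = (real N - real c * q) / real N" unfolding Beq using Nr by (simp add: field_simps)
    have "real (Suc k) * (q / real N) * B ^ k = B ^ Suc k * (real (Suc k) * q / (real N - real c * q))"
      by (rule alg4[OF BB]) (use Nr Bpos in auto)
    then show ?thesis unfolding Suc by simp
  qed
  have "(A ^ (N0 - m) * B ^ (N - N0)
      - (real (N0 - m) * (q / real N) * A ^ (N0 - m - 1) * B ^ (N - N0)
         + real (N - N0) * (q / real N) * A ^ (N0 - m) * B ^ (N - N0 - 1))) / q ^ (N0 - m)
      = B ^ (N - N0) * ?r ^ (N0 - m) * (1 - real (N0 - m) / real (N - c) - real (N - N0) * q / (real N - real c * q))"
    by (rule alg2[OF h1 h2 h3]) (use q in simp)
  then show ?thesis unfolding Beq by simp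
qed

lemma aux5: "(C::real) \<noteq> 0 \<Longrightarrow> Q \<noteq> 0 \<Longrightarrow> (C * (Q * V)) / (C * (Q * R)) = V / R"
  by simp

lemma part2_main:
  fixes N c m :: nat and q :: real and H0 :: "nat set"
  assumes N: "N \<ge> 1" and H0: "H0 \<subseteq> {1..N}" and q: "0 < q" "q < 1"
    and c1: "c \<ge> 1" and cm: "c \<le> m" and mH: "m \<le> card H0"
  shows "cond_prob (pmodel N) (\<lambda>p. ktilde_plus H0 c N q p = c)
                                   (\<lambda>p. load H0 N q p (N + 1) = m)
              = (1 - real c * q / real N) ^ (N - card H0)
                * (1 - real c / real N) ^ (card H0 - m)
                * (1 - real (card H0 - m) / real (N - c)
                     - real (N - card H0) * q / (real N - real c * q))"
proof -
  let ?I = "{1..N}"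
  let ?F = "PiE ?I (\<lambda>_::nat. {1..N+1})"
  let ?W = "\<lambda>f. \<Prod>j\<in>?I. wt N q (f j)"
  let ?b = "\<lambda>j. if j \<in> H0 then 0 else 1 - q"
  let ?A = "real (N - c) * (q / real N)"
  let ?B = "real (N - c) * (q / real N) + (1 - q)"
  let ?V = "?A ^ (card H0 - m) * ?B ^ (N - card H0)
      - (real (card H0 - m) * (q / real N) * ?A ^ (card H0 - m - 1) * ?B ^ (N - card H0)
         + real (N - card H0) * (q / real N) * ?A ^ (card H0 - m) * ?B ^ (N - card H0 - 1))"
  have fH0: "finite H0" using H0 finite_subset by auto
  have cH0: "card H0 \<le> N" using card_mono[OF _ H0] by simp
  have cN: "c \<le> N" using cm mH cH0 by simp
  let ?Phi = "\<lambda>g. (if c \<le> card {j\<in>H0. g j = N+1}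
        then Max {i\<in>{c..N}. card {j\<in>?I. g j \<in> {1..i}} = i - c}
        else Max {i\<in>{0..N}. card {j\<in>?I. g j \<in> {1..i}} = i}) = c \<and> card {j\<in>H0. g j = N+1} = m"
  have num1: "measure (pmodel N) {p \<in> space (pmodel N). ktilde_plus H0 c N q p = c \<and> load H0 N q p (N + 1) = m}
      = (\<Sum>f\<in>?F. if ?Phi f then ?W f else 0)"
  proof (rule measure_event[OF N q])
    fix g p assume g: "g \<in> PiE {1..N} (\<lambda>_. {0..N+1})" and p: "p \<in> PiE {1..N} (\<lambda>j. binx N q (g j))"
    have L: "load H0 N q p (N + 1) = card {j\<in>H0. g j = N+1}"
      by (rule load_box[OF N q g p H0]) auto
    have S1: "{i\<in>{c..N}. loadsum {1..N} N q p 1 i = i - c} = {i\<in>{c..N}. card {j\<in>?I. g j \<in> {1..i}} = i - c}"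
      using loadsum_box[OF N q g p] by auto
    have S2: "{i\<in>{0..N}. loadsum {1..N} N q p 1 i = i} = {i\<in>{0..N}. card {j\<in>?I. g j \<in> {1..i}} = i}"
      using loadsum_box[OF N q g p] by auto
    show "(ktilde_plus H0 c N q p = c \<and> load H0 N q p (N + 1) = m) = ?Phi g"
      unfolding ktilde_plus_def ktilde_def L S1 S2 ..
  qed
  also have "\<dots> = (\<Sum>f\<in>?F. if card {j\<in>H0. f j = N+1} = m \<and> card {j\<in>?I. f j \<le> c} = 0 \<and>
               (\<forall>i\<in>{c+1..N}. card {j\<in>?I. f j \<le> i} + c < i) then ?W f else 0)"
  proof (intro sum.cong refl)
    fix f assume f: "f \<in> ?F"
    show "(if ?Phi f then ?W f else 0) = (if card {j\<in>H0. f j = N+1} = m \<and> card {j\<in>?I. f j \<le> c} = 0 \<and>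
               (\<forall>i\<in>{c+1..N}. card {j\<in>?I. f j \<le> i} + c < i) then ?W f else 0)"
    proof (cases "card {j\<in>H0. f j = N+1} = m")
      case False then show ?thesis by simp
    next
      case True
      have "card {j\<in>H0. f j = N+1} \<le> card {j\<in>?I. f j = N+1}" using H0 by (intro card_mono) auto
      then have ct: "c \<le> card {j\<in>?I. f j = N+1}" using True cm by simp
      have "?Phi f \<longleftrightarrow> Max {i\<in>{c..N}. card {j\<in>?I. f j \<in> {1..i}} = i - c} = c"
        using True cm by simp
      also have "\<dots> \<longleftrightarrow> (card {j\<in>?I. f j \<le> c} = 0 \<and> (\<forall>i\<in>{c+1..N}. card {j\<in>?I. f j \<le> i} + c < i))"
        by (rule kp_equiv[OF f cN ct])
      finally show ?thesis using True by simp
    qed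
  qed
  also have "\<dots> = (\<Sum>M\<in>{M. M \<subseteq> H0 \<and> card M = m}. (1 - q) ^ m *
          Lsum (N - c) (?I - M) (\<lambda>_. q / real N) ?b)"
    by (rule num_sum[OF N cN H0])
  also have "\<dots> = (\<Sum>M\<in>{M. M \<subseteq> H0 \<and> card M = m}. (1 - q) ^ m * ?V)"
  proof (intro sum.cong refl)
    fix M assume M: "M \<in> {M. M \<subseteq> H0 \<and> card M = m}"
    show "(1 - q) ^ m * Lsum (N - c) (?I - M) (\<lambda>_. q / real N) ?b = (1 - q) ^ m * ?V"
      using lsum_val[OF N H0 _ _ cm, of M] M by simp
  qed
  also have "\<dots> = real (card H0 choose m) * ((1 - q) ^ m * ?V)"
    using fH0 by (simp add: n_subsets)
  finally have num: "measure (pmodel N) {p \<in> space (pmodel N). ktilde_plus H0 c N q p = c \<and> load H0 N q p (N + 1) = m}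
      = real (card H0 choose m) * ((1 - q) ^ m * ?V)" .
  have "measure (pmodel N) {p \<in> space (pmodel N). load H0 N q p (N + 1) = m}
      = (\<Sum>f\<in>?F. if card {j\<in>H0. f j = N+1} = m then ?W f else 0)"
  proof (rule measure_event[OF N q])
    fix g p assume g: "g \<in> PiE {1..N} (\<lambda>_. {0..N+1})" and p: "p \<in> PiE {1..N} (\<lambda>j. binx N q (g j))"
    have L: "load H0 N q p (N + 1) = card {j\<in>H0. g j = N+1}"
      by (rule load_box[OF N q g p H0]) auto
    show "(load H0 N q p (N + 1) = m) = (card {j\<in>H0. g j = N+1} = m)" unfolding L ..
  qed
  also have "\<dots> = real (card H0 choose m) * ((1 - q) ^ m * q ^ (card H0 - m))"
    by (rule den_sum[OF N H0])
  finally have den: "measure (pmodel N) {p \<in> space (pmodel N). load H0 N q p (N + 1) = m}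
      = real (card H0 choose m) * ((1 - q) ^ m * q ^ (card H0 - m))" .
  have Cpos: "real (card H0 choose m) \<noteq> 0" using mH by simp
  have qpos: "(1 - q) ^ m \<noteq> 0" using q by simp
  have "cond_prob (pmodel N) (\<lambda>p. ktilde_plus H0 c N q p = c) (\<lambda>p. load H0 N q p (N + 1) = m)
      = (real (card H0 choose m) * ((1 - q) ^ m * ?V)) / (real (card H0 choose m) * ((1 - q) ^ m * q ^ (card H0 - m)))"
    unfolding cond_prob_def num den ..
  also have "\<dots> = ?V / q ^ (card H0 - m)"
    by (rule aux5[OF Cpos qpos])
  also have "\<dots> = (1 - real c * q / real N) ^ (N - card H0)
                * (1 - real c / real N) ^ (card H0 - m)
                * (1 - real (card H0 - m) / real (N - c)
                     - real (N - card H0) * q / (real N - real c * q))"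
    by (rule final_alg[OF N q c1 cm mH cH0])
  finally show ?thesis .
qed


theorem corollary2:
  fixes N :: nat and H0 :: "nat set" and q :: real
  assumes "N \<ge> 1" and "H0 \<subseteq> {1..N}" and "0 < q" and "q < 1"
  shows "(\<forall>l\<le>N.
            measure (pmodel N) {p \<in> space (pmodel N). ktilde N q p = l}
              = (1 - q) / (1 - q + real (N - l) * q / real N)
                * measure (pmodel N) {p \<in> space (pmodel N). loadsum {1..N} N q p 1 l = l}
          \<and> measure (pmodel N) {p \<in> space (pmodel N). loadsum {1..N} N q p 1 l = l}
              = real (N choose l) * (q * real l / real N) ^ l
                * (1 - q * real l / real N) ^ (N - l))
       \<and> (\<forall>c::nat. c \<ge> 1 \<longrightarrow>
            (\<forall>m. c \<le> m \<and> m \<le> card H0 \<longrightarrow>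
              cond_prob (pmodel N) (\<lambda>p. ktilde_plus H0 c N q p = c)
                                   (\<lambda>p. load H0 N q p (N + 1) = m)
              = (1 - real c * q / real N) ^ (N - card H0)
                * (1 - real c / real N) ^ (card H0 - m)
                * (1 - real (card H0 - m) / real (N - c)
                     - real (N - card H0) * q / (real N - real c * q))))"
    using part1_main[OF assms(1) assms(3) assms(4)] part2_main[OF assms(1) assms(2) assms(3) assms(4)]
  by blast

end
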